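(* Let $V\subseteq\mathbb{Z}^2$ be infinite and connected (in the nearest-neighbour lattice $(\mathbb{Z}^2,\mathcal{E}^2)$) with $\mathbb{Z}^2\setminus V$ also infinite and connected, let $E$ be the set of nearest-neighbour edges with both endpoints in $V$, and let $(v_i)_{i\in\mathbb{Z}}$ be the boundary vertex sequence of $V$ described in the context. Then for every $\omega\in[0,\infty)^E$ and every $x,y\in V$, the limit \[ B(x,y):=\lim_{n\to\infty} B_n(x,y),\qquad B_n(x,y)=\tau(x,v_n)-\tau(y,v_n),\] exists (as a real number).
   Context: The dual lattice has vertex set $\mathbb{Z}^2+(1/2,1/2)$ and edge set $\mathcal{E}^2+(1/2,1/2)$; the dual edge $e^*$ is the one bisecting $e\in\mathcal{E}^2$. For $V$ as in the claim there is a doubly infinite dual path $\Gamma=(e_i^* )_{i\in\mathbb{Z}}$ with no vertex self-intersections such that $(V,E)$ is one of the two components of the graph obtained from $(\mathbb{Z}^2,\mathcal{E}^2)$ by deleting the edges $e_i$ dual to the $e_i^*$; fix such a $\Gamma$ and its indexing, and let $v_i$ be the endpoint of $e_i$ lying in $V$ (a vertex may appear as $v_i$ for several $i$). For $\omega=(\omega_e)_{e\in E}\in[0,\infty)^E$, the passage time of a finite path $\gamma$ in $(V,E)$ is $\tau(\gamma)=\sum_{e\in\gamma}\omega_e$, and $\tau(x,y)=\inf\{\tau(\gamma):\gamma \text{ a path in }(V,E)\text{ from }x\text{ to }y\}$. *)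

theory Defs
  imports Complex_Main
begin

type_synonym vtx = "int \<times> int"

definition nn_adj :: "vtx \<Rightarrow> vtx \<Rightarrow> bool" where
  "nn_adj p q \<longleftrightarrow> \<bar>fst p - fst q\<bar> + \<bar>snd p - snd q\<bar> = 1"

definition nn_edges :: "vtx set set" where
  "nn_edges = {{p, q} | p q. nn_adj p q}"

definition is_path :: "(vtx \<Rightarrow> vtx \<Rightarrow> bool) \<Rightarrow> vtx set \<Rightarrow> vtx \<Rightarrow> vtx \<Rightarrow> vtx list \<Rightarrow> bool" where
  "is_path R S x y xs \<longleftrightarrow> xs \<noteq> [] \<and> hd xs = x \<and> last xs = y \<and> set xs \<subseteq> S \<and> successively R xs"

definition connected_in :: "(vtx \<Rightarrow> vtx \<Rightarrow> bool) \<Rightarrow> vtx set \<Rightarrow> bool" where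
  "connected_in R S \<longleftrightarrow> (\<forall>x\<in>S. \<forall>y\<in>S. \<exists>xs. is_path R S x y xs)"

definition is_component :: "(vtx \<Rightarrow> vtx \<Rightarrow> bool) \<Rightarrow> vtx set \<Rightarrow> bool" where
  "is_component R S \<longleftrightarrow> S \<noteq> {} \<and> connected_in R S \<and> (\<forall>x y. x \<in> S \<longrightarrow> R x y \<longrightarrow> y \<in> S)"

text \<open>Dual vertex (a,b) stands for the point (a+1/2, b+1/2).
  The primal edge bisected by the dual edge between dual vertices p and q.\<close>
definition primal_of_dual :: "vtx \<Rightarrow> vtx \<Rightarrow> vtx set" where
  "primal_of_dual p q =
     (if snd p = snd q then
        (let a = max (fst p) (fst q) in {(a, snd p), (a, snd p + 1)})
      else
        (let b = max (snd p) (snd q) in {(fst p, b), (fst p + 1, b)}))"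

definition dual_path :: "(int \<Rightarrow> vtx) \<Rightarrow> bool" where
  "dual_path w \<longleftrightarrow> inj w \<and> (\<forall>i. nn_adj (w i) (w (i + 1)))"

definition gamma_edge :: "(int \<Rightarrow> vtx) \<Rightarrow> int \<Rightarrow> vtx set" where
  "gamma_edge w i = primal_of_dual (w i) (w (i + 1))"

definition cut_adj :: "(int \<Rightarrow> vtx) \<Rightarrow> vtx \<Rightarrow> vtx \<Rightarrow> bool" where
  "cut_adj w p q \<longleftrightarrow> nn_adj p q \<and> {p, q} \<notin> range (gamma_edge w)"

definition edges_in :: "vtx set \<Rightarrow> vtx set set" where
  "edges_in V = {e \<in> nn_edges. e \<subseteq> V}"

definition path_time :: "(vtx set \<Rightarrow> real) \<Rightarrow> vtx list \<Rightarrow> real" where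
  "path_time \<omega> xs = sum_list (map2 (\<lambda>a b. \<omega> {a, b}) xs (tl xs))"

definition pass_time :: "vtx set \<Rightarrow> (vtx set \<Rightarrow> real) \<Rightarrow> vtx \<Rightarrow> vtx \<Rightarrow> real" where
  "pass_time V \<omega> x y = Inf {path_time \<omega> xs | xs. is_path nn_adj V x y xs}"

end

theory Submission
  imports Defs "HOL-Analysis.Analysis"
begin


lemma int_sq:
  assumes "of_int a \<le> (x::real)" "x \<le> of_int a + 1" "of_int c \<le> x" "x \<le> of_int c + 1"
  shows "c = a \<or> (c = a+1 \<and> x = of_int c) \<or> (c = a - 1 \<and> x = of_int a)"
proof -
  have "of_int c \<le> (of_int (a + 1)::real)" using assms by simp
  hence 1: "c \<le> a + 1" by linarith
  have "of_int a \<le> (of_int (c + 1)::real)" using assms by simp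
  hence 2: "a \<le> c + 1" by linarith
  show ?thesis
  proof (cases "c = a")
    case False
    with 1 2 have "c = a + 1 \<or> c = a - 1" by linarith
    then show ?thesis using assms by auto
  qed simp
qed

lemma int_mid:
  assumes "of_int a \<le> (x::real)" "x \<le> of_int a + 1" "x = of_int c"
  shows "c = a \<or> c = a + 1"
proof -
  have "of_int a \<le> (of_int c::real)" "(of_int c::real) \<le> of_int (a+1)" using assms by auto
  hence "a \<le> c" "c \<le> a + 1" by linarith+
  thus ?thesis by linarith
qed

definition hb :: "int \<times> int \<Rightarrow> bool \<Rightarrow> real \<Rightarrow> real \<Rightarrow> bool" where
  "hb a h x y \<longleftrightarrow> (if h then of_int (fst a) \<le> x \<and> x \<le> of_int (fst a) + 1 \<and> y = of_int (snd a)
      else of_int (snd a) \<le> y \<and> y \<le> of_int (snd a) + 1 \<and> x = of_int (fst a))"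

definition step :: "int \<times> int \<Rightarrow> bool \<Rightarrow> int \<times> int" where
  "step a h = (if h then (fst a + 1, snd a) else (fst a, snd a + 1))"

lemma core_n:
  assumes "{a, step a h} \<noteq> {c, step c h'}" "hb a h x y" "hb c h' x y"
  shows "\<exists>p\<in>{a,step a h}\<inter>{c,step c h'}. x = of_int (fst p) \<and> y = of_int (snd p)"
proof -
  obtain a1 a2 c1 c2 where A: "a = (a1,a2)" "c = (c1,c2)" by fastforce
  show ?thesis
  proof (cases h; cases h')
    assume h: h h'
    with assms have "y = of_int a2" "y = of_int c2" "of_int a1 \<le> x" "x \<le> of_int a1 + 1" 
      "of_int c1 \<le> x" "x \<le> of_int c1 + 1" "a1 \<noteq> c1 \<or> a2 \<noteq> c2" by (auto simp: hb_def step_def A)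
    moreover then have "a2 = c2" by simp
    ultimately show ?thesis using int_sq[of a1 x c1] h by (auto simp: step_def A)
  next
    assume h: "\<not>h" "\<not>h'"
    with assms have "x = of_int a1" "x = of_int c1" "of_int a2 \<le> y" "y \<le> of_int a2 + 1" 
      "of_int c2 \<le> y" "y \<le> of_int c2 + 1" "a1 \<noteq> c1 \<or> a2 \<noteq> c2" by (auto simp: hb_def step_def A)
    moreover then have "a1 = c1" by simp
    ultimately show ?thesis using int_sq[of a2 y c2] h by (auto simp: step_def A)
  next
    assume h: "h" "\<not>h'"
    with assms have "y = of_int a2" "x = of_int c1" "of_int a1 \<le> x" "x \<le> of_int a1 + 1" 
      "of_int c2 \<le> y" "y \<le> of_int c2 + 1" by (auto simp: hb_def step_def A)
    then show ?thesis using int_mid[of a1 x c1] int_mid[of c2 y a2] h by (auto simp: step_def A)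
  next
    assume h: "\<not>h" "h'"
    with assms have "x = of_int a1" "y = of_int c2" "of_int a2 \<le> y" "y \<le> of_int a2 + 1" 
      "of_int c1 \<le> x" "x \<le> of_int c1 + 1" by (auto simp: hb_def step_def A)
    then show ?thesis using int_mid[of a2 y c2] int_mid[of c1 x a1] h by (auto simp: step_def A)
  qed
qed

definition emb :: "int \<times> int \<Rightarrow> complex" where
  "emb p = Complex (of_int (fst p)) (of_int (snd p))"

lemma emb_inj: "emb p = emb q \<longleftrightarrow> p = q"
  by (cases p; cases q) (auto simp: emb_def complex_eq_iff)

lemma nn_adj_sym: "nn_adj a b \<longleftrightarrow> nn_adj b a"
  unfolding nn_adj_def by (simp add: abs_minus_commute)

lemma nn_adj_disj:
  "nn_adj a b \<longleftrightarrow> (b = (fst a + 1, snd a) \<or> b = (fst a - 1, snd a) \<or> b = (fst a, snd a + 1) \<or> b = (fst a, snd a - 1))"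
  unfolding nn_adj_def by (cases a; cases b) auto

lemma nn_adj_norm:
  assumes "nn_adj a b" obtains s h where "{a,b} = {s, step s h}"
proof -
  obtain a1 a2 b1 b2 where A: "a = (a1,a2)" "b = (b1,b2)" by fastforce
  have "b = (a1+1,a2) \<or> b = (a1 - 1, a2) \<or> b = (a1, a2+1) \<or> b = (a1,a2 - 1)"
    using assms unfolding nn_adj_disj A by auto
  then show ?thesis
  proof (elim disjE)
    assume "b = (a1+1,a2)" thus ?thesis using that[of a True] by (auto simp: A step_def)
  next
    assume "b = (a1 - 1,a2)" thus ?thesis using that[of b True] by (auto simp: A step_def)
  next
    assume "b = (a1,a2+1)" thus ?thesis using that[of a False] by (auto simp: A step_def)
  next
    assume "b = (a1,a2 - 1)" thus ?thesis using that[of b False] by (auto simp: A step_def)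
  qed
qed

lemma seg_hb:
  assumes "z \<in> closed_segment (emb s) (emb (step s h))"
  shows "hb s h (Re z) (Im z)"
proof -
  obtain u where u: "0 \<le> u" "u \<le> 1" "z = (1 - u) *\<^sub>R emb s + u *\<^sub>R emb (step s h)"
    using assms unfolding in_segment by auto
  have R: "Re z = (1 - u) * of_int (fst s) + u * of_int (fst (step s h))"
    and I: "Im z = (1 - u) * of_int (snd s) + u * of_int (snd (step s h))"
    using u(3) by (simp_all add: emb_def)
  show ?thesis
  proof (cases h)
    case True
    have "Re z = of_int (fst s) + u" "Im z = of_int (snd s)" using R I True
      by (simp_all add: step_def left_diff_distrib distrib_left)
    then show ?thesis using u(1,2) True by (simp add: hb_def)
  next
    case False
    have "Im z = of_int (snd s) + u" "Re z = of_int (fst s)" using R I False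
      by (simp_all add: step_def left_diff_distrib distrib_left)
    then show ?thesis using u(1,2) False by (simp add: hb_def)
  qed
qed

lemma seg_norm:
  assumes "{a,b} = {s, step s h}"
  shows "closed_segment (emb a) (emb b) = closed_segment (emb s) (emb (step s h))"
  using assms by (auto simp: doubleton_eq_iff closed_segment_commute)

lemma seg_inter:
  assumes "nn_adj a b" "nn_adj c d" "{a,b} \<noteq> {c,d}"
    "z \<in> closed_segment (emb a) (emb b)" "z \<in> closed_segment (emb c) (emb d)"
  shows "\<exists>p\<in>{a,b}\<inter>{c,d}. z = emb p"
proof -
  obtain s h where 1: "{a,b} = {s, step s h}" using nn_adj_norm[OF assms(1)] .
  obtain t h' where 2: "{c,d} = {t, step t h'}" using nn_adj_norm[OF assms(2)] .
  have "hb s h (Re z) (Im z)" "hb t h' (Re z) (Im z)"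
    using seg_hb assms(4,5) seg_norm[OF 1] seg_norm[OF 2] by auto
  from core_n[OF _ this] assms(3) 1 2 obtain p where
    "p\<in>{a,b}\<inter>{c,d}" "Re z = of_int (fst p)" "Im z = of_int (snd p)" by auto
  thus ?thesis by (auto simp: emb_def complex_eq_iff)
qed

lemma seg_pt:
  assumes "nn_adj a b" "emb p \<in> closed_segment (emb a) (emb b)"
  shows "p \<in> {a,b}"
proof -
  obtain s h where 1: "{a,b} = {s, step s h}" using nn_adj_norm[OF assms(1)] .
  have "emb p \<in> closed_segment (emb s) (emb (step s h))" using assms(2) seg_norm[OF 1] by simp
  from seg_hb[OF this] have H: "hb s h (of_int (fst p)) (of_int (snd p))" by (simp add: emb_def)
  obtain s1 s2 p1 p2 where A: "s = (s1,s2)" "p = (p1,p2)" by fastforce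
  show ?thesis
  proof (cases h)
    case True
    with H have "p2 = s2" "of_int s1 \<le> (of_int p1::real)" "(of_int p1::real) \<le> of_int s1 + 1"
      by (auto simp: hb_def A)
    with int_mid[of s1 "of_int p1" p1] have "p1 = s1 \<or> p1 = s1 + 1" by auto
    with \<open>p2 = s2\<close> 1 True show ?thesis by (auto simp: A step_def)
  next
    case False
    with H have "p1 = s1" "of_int s2 \<le> (of_int p2::real)" "(of_int p2::real) \<le> of_int s2 + 1"
      by (auto simp: hb_def A)
    with int_mid[of s2 "of_int p2" p2] have "p2 = s2 \<or> p2 = s2 + 1" by auto
    with \<open>p1 = s1\<close> 1 False show ?thesis by (auto simp: A step_def)
  qed
qed


fun poly :: "(int \<times> int) list \<Rightarrow> real \<Rightarrow> complex" where
  "poly [] = linepath 0 0"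
| "poly [p] = linepath (emb p) (emb p)"
| "poly [p,q] = linepath (emb p) (emb q)"
| "poly (p#q#r#rest) = linepath (emb p) (emb q) +++ poly (q#r#rest)"

definition edges_of :: "(int \<times> int) list \<Rightarrow> (int \<times> int) set set" where
  "edges_of xs = (\<lambda>(a,b). {a,b}) ` set (zip xs (tl xs))"

lemma poly_props:
  "xs \<noteq> [] \<Longrightarrow> path (poly xs) \<and> pathstart (poly xs) = emb (hd xs) \<and> pathfinish (poly xs) = emb (last xs)"
  by (induction xs rule: poly.induct) auto

lemma poly_image:
  "xs \<noteq> [] \<Longrightarrow> path_image (poly xs) = emb ` set xs \<union> (\<Union>(a,b)\<in>set (zip xs (tl xs)). closed_segment (emb a) (emb b))"
proof (induction xs rule: poly.induct)
  case (4 p q r rest)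
  have "path_image (poly (p#q#r#rest)) = closed_segment (emb p) (emb q) \<union> path_image (poly (q#r#rest))"
    using poly_props[of "q#r#rest"] by (simp add: path_image_join)
  also have "\<dots> = emb ` set (p#q#r#rest) \<union> (\<Union>(a,b)\<in>set (zip (p#q#r#rest) (tl (p#q#r#rest))). closed_segment (emb a) (emb b))"
    using "4.IH" by auto
  finally show ?case .
qed auto

lemma zip_tl_adj: "(a,b) \<in> set (zip xs (tl xs)) \<Longrightarrow> successively R xs \<Longrightarrow> R a b \<and> a \<in> set xs \<and> b \<in> set xs"
proof (induction xs rule: induct_list012)
  case (3 x y zs)
  then show ?case by auto
qed auto

lemma zip_tl_mem: "(a,b) \<in> set (zip xs (tl xs)) \<Longrightarrow> a \<in> set xs \<and> b \<in> set xs"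
  by (metis list.set_sel(2) set_zip_leftD set_zip_rightD tl_Nil zip_Nil)

lemma edges_of_sub: "E \<in> edges_of xs \<Longrightarrow> E \<subseteq> set xs"
  unfolding edges_of_def using zip_tl_mem by fastforce

lemma in_poly_image:
  assumes "xs \<noteq> []" "z \<in> path_image (poly xs)"
  obtains p where "p \<in> set xs" "z = emb p"
  | a b where "(a,b) \<in> set (zip xs (tl xs))" "z \<in> closed_segment (emb a) (emb b)"
  using assms poly_image by auto

lemma poly_inter:
  assumes "successively nn_adj xs" "successively nn_adj ys" "xs \<noteq> []" "ys \<noteq> []"
    "edges_of xs \<inter> edges_of ys = {}"
  shows "path_image (poly xs) \<inter> path_image (poly ys) \<subseteq> emb ` (set xs \<inter> set ys)"
proof
  fix z assume z: "z \<in> path_image (poly xs) \<inter> path_image (poly ys)"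
  show "z \<in> emb ` (set xs \<inter> set ys)"
  proof (rule in_poly_image[OF assms(3), of z]; rule in_poly_image[OF assms(4), of z])
    fix p q assume "p \<in> set xs" "z = emb p" "q \<in> set ys" "z = emb q"
    then show ?thesis by (auto simp: emb_inj)
  next
    fix p c d assume "p \<in> set xs" "z = emb p" "(c,d) \<in> set (zip ys (tl ys))" "z \<in> closed_segment (emb c) (emb d)"
    note cd_ = this(3)
    have "emb p \<in> closed_segment (emb c) (emb d)" using \<open>z = emb p\<close> \<open>z \<in> closed_segment (emb c) (emb d)\<close> by simp
    moreover have "nn_adj c d" "c \<in> set ys" "d \<in> set ys" using zip_tl_adj[OF _ assms(2)] cd_ by auto
    ultimately have "p \<in> {c,d}" using seg_pt[of c d p] by simp
    then show ?thesis using \<open>p \<in> set xs\<close> \<open>z = emb p\<close> \<open>c \<in> set ys\<close> \<open>d \<in> set ys\<close> by auto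
  next
    fix a b q assume "q \<in> set ys" "z = emb q" "(a,b) \<in> set (zip xs (tl xs))" "z \<in> closed_segment (emb a) (emb b)"
    note ab_ = this(3)
    have "emb q \<in> closed_segment (emb a) (emb b)" using \<open>z = emb q\<close> \<open>z \<in> closed_segment (emb a) (emb b)\<close> by simp
    moreover have "nn_adj a b" "a \<in> set xs" "b \<in> set xs" using zip_tl_adj[OF _ assms(1)] ab_ by auto
    ultimately have "q \<in> {a,b}" using seg_pt[of a b q] by simp
    then show ?thesis using \<open>q \<in> set ys\<close> \<open>z = emb q\<close> \<open>a \<in> set xs\<close> \<open>b \<in> set xs\<close> by auto
  next
    fix a b c d assume ab: "(a,b) \<in> set (zip xs (tl xs))" "z \<in> closed_segment (emb a) (emb b)"
      and cd: "(c,d) \<in> set (zip ys (tl ys))" "z \<in> closed_segment (emb c) (emb d)"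
    have "{a,b} \<in> edges_of xs" "{c,d} \<in> edges_of ys" using ab cd unfolding edges_of_def by force+
    hence ne: "{a,b} \<noteq> {c,d}" using assms(5) by auto
    have "nn_adj a b" "a \<in> set xs" "b \<in> set xs" using zip_tl_adj[OF ab(1) assms(1)] by auto
    moreover have "nn_adj c d" "c \<in> set ys" "d \<in> set ys" using zip_tl_adj[OF cd(1) assms(2)] by auto
    ultimately obtain p where "p \<in> {a,b} \<inter> {c,d}" "z = emb p" using seg_inter[OF _ _ ne ab(2) cd(2)] by auto
    then show ?thesis using \<open>a \<in> set xs\<close> \<open>b \<in> set xs\<close> \<open>c \<in> set ys\<close> \<open>d \<in> set ys\<close> by auto
  qed (use z in auto)
qed

lemma poly_arc:
  "distinct xs \<Longrightarrow> 2 \<le> length xs \<Longrightarrow> successively nn_adj xs \<Longrightarrow> arc (poly xs)"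
proof (induction xs rule: poly.induct)
  case (3 p q)
  then have "emb p \<noteq> emb q" by (simp add: emb_inj)
  then show ?case by simp
next
  case (4 p q r rest)
  have arc2: "arc (poly (q#r#rest))" using 4 by simp
  have pq: "emb p \<noteq> emb q" "nn_adj p q" using 4 by (simp_all add: emb_inj)
  have pn: "p \<notin> set (q#r#rest)" using "4.prems"(1) by simp
  have E: "edges_of [p,q] \<inter> edges_of (q#r#rest) = {}"
  proof -
    have "{p,q} \<notin> edges_of (q#r#rest)"
    proof
      assume "{p,q} \<in> edges_of (q#r#rest)"
      then have "p \<in> set (q#r#rest)" using edges_of_sub by blast
      thus False using pn by simp
    qed
    thus ?thesis by (simp add: edges_of_def)
  qed
  have s1: "successively nn_adj [p,q]" using pq by simp
  have s2: "successively nn_adj (q#r#rest)" using "4.prems"(3) by simp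
  have "path_image (poly [p,q]) \<inter> path_image (poly (q#r#rest)) \<subseteq> emb ` (set [p,q] \<inter> set (q#r#rest))"
    by (rule poly_inter[OF s1 s2 _ _ E]) simp_all
  also have "\<dots> \<subseteq> {emb q}" using pn by auto
  finally have I: "path_image (linepath (emb p) (emb q)) \<inter> path_image (poly (q#r#rest)) \<subseteq> {pathstart (poly (q#r#rest))}"
    using poly_props[of "q#r#rest"] by simp
  have a1: "arc (linepath (emb p) (emb q))" using pq(1) by simp
  have "arc (linepath (emb p) (emb q) +++ poly (q#r#rest))"
    by (rule arc_join[OF a1 arc2 _ I]) (use poly_props[of "q#r#rest"] in simp)
  then show ?case by simp
qed simp_all


lemma hd_last_not_edge:
  assumes "distinct xs" "3 \<le> length xs"
  shows "{hd xs, last xs} \<notin> edges_of xs"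
proof
  assume "{hd xs, last xs} \<in> edges_of xs"
  then obtain e where e: "e \<in> set (zip xs (tl xs))" "{hd xs, last xs} = (case e of (a,b) \<Rightarrow> {a,b})"
    unfolding edges_of_def by (rule imageE) simp
  obtain a b where ab: "e = (a,b)" by (cases e)
  from e ab obtain i where i: "i < min (length xs) (length (tl xs))" "a = xs ! i" "b = tl xs ! i"
    by (auto simp: set_zip)
  have n: "i + 1 < length xs" using i(1) by simp
  have b: "b = xs ! (i+1)" using i(3) n by (simp add: nth_tl)
  have ne: "xs \<noteq> []" using assms(2) by auto
  have hd: "hd xs = xs ! 0" and lst: "last xs = xs ! (length xs - 1)"
    using hd_conv_nth[OF ne] last_conv_nth[OF ne] by auto
  have eq: "{xs ! 0, xs ! (length xs - 1)} = {xs ! i, xs ! (i+1)}" using e(2) ab i(2) b hd lst by simp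
  have D: "\<And>j k. j < length xs \<Longrightarrow> k < length xs \<Longrightarrow> xs ! j = xs ! k \<longleftrightarrow> j = k"
    using assms(1) nth_eq_iff_index_eq by blast
  have L: "length xs - 1 < length xs" "0 < length xs" using assms(2) by auto
  from eq consider "xs ! 0 = xs ! i" "xs ! (length xs - 1) = xs ! (i+1)"
    | "xs ! 0 = xs ! (i+1)" "xs ! (length xs - 1) = xs ! i" by (auto simp: doubleton_eq_iff)
  then show False
  proof cases
    case 1
    then have "0 = i" "length xs - 1 = i + 1" using D[OF L(2), of i] D[OF L(1), of "i+1"] n by auto
    then show False using assms(2) by simp
  next
    case 2
    then have "0 = i + 1" using D[OF L(2), of "i+1"] n by auto
    then show False by simp
  qed
qed

definition closed_poly :: "(int \<times> int) list \<Rightarrow> real \<Rightarrow> complex" where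
  "closed_poly xs = poly xs +++ linepath (emb (last xs)) (emb (hd xs))"

lemma closed_poly_props:
  assumes "distinct xs" "3 \<le> length xs" "successively nn_adj xs" "nn_adj (last xs) (hd xs)"
  shows "simple_path (closed_poly xs)" "pathfinish (closed_poly xs) = pathstart (closed_poly xs)"
    "path_image (closed_poly xs) = path_image (poly xs) \<union> closed_segment (emb (last xs)) (emb (hd xs))"
proof -
  have ne: "xs \<noteq> []" using assms(2) by auto
  have P: "path (poly xs)" "pathstart (poly xs) = emb (hd xs)" "pathfinish (poly xs) = emb (last xs)"
    using poly_props[OF ne] by auto
  have hl: "hd xs \<noteq> last xs"
  proof -
    have "hd xs = xs ! 0" "last xs = xs ! (length xs - 1)" using hd_conv_nth[OF ne] last_conv_nth[OF ne] by auto
    moreover have "xs ! 0 \<noteq> xs ! (length xs - 1)" using assms(2) nth_eq_iff_index_eq[OF assms(1), of 0 "length xs - 1"] ne by simp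
    ultimately show ?thesis by simp
  qed
  have a1: "arc (poly xs)" using poly_arc assms by simp
  have a2: "arc (linepath (emb (last xs)) (emb (hd xs)))" using hl by (simp add: emb_inj)
  have E: "edges_of xs \<inter> edges_of [last xs, hd xs] = {}"
    using hd_last_not_edge[OF assms(1,2)] by (auto simp: edges_of_def insert_commute)
  have "path_image (poly xs) \<inter> path_image (poly [last xs, hd xs]) \<subseteq> emb ` (set xs \<inter> set [last xs, hd xs])"
    by (rule poly_inter[OF assms(3) _ ne _ E]) (use assms(4) in simp_all)
  also have "\<dots> \<subseteq> {emb (hd xs), emb (last xs)}" by auto
  finally have I: "path_image (poly xs) \<inter> path_image (linepath (emb (last xs)) (emb (hd xs))) \<subseteq>
     {pathstart (poly xs), pathstart (linepath (emb (last xs)) (emb (hd xs)))}" using P by simp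
  show "simple_path (closed_poly xs)" unfolding closed_poly_def
    by (rule simple_path_join_loop[OF a1 a2 _ _ I]) (use P in simp_all)
  show "pathfinish (closed_poly xs) = pathstart (closed_poly xs)" unfolding closed_poly_def using P by simp
  show "path_image (closed_poly xs) = path_image (poly xs) \<union> closed_segment (emb (last xs)) (emb (hd xs))"
    unfolding closed_poly_def using P by (simp add: path_image_join)
qed

lemma halfside:
  fixes S :: "complex set" and M f :: complex
  assumes nf: "norm f = 1"
    and off: "\<forall>z\<in>S. dist M z < 1 \<longrightarrow> inner f (z - M) = 0"
    and A3: "closed_segment (M + f) M \<inter> S \<subseteq> {M}"
  shows "\<forall>z \<in> ball M 1 \<inter> {z. inner f z > inner f M}. connected_component (-S) (M+f) z"
proof
  let ?H = "ball M 1 \<inter> {z. inner f z > inner f M}"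
  let ?T = "closed_segment (M + f) (M + f /\<^sub>R 2)"
  fix z assume z: "z \<in> ?H"
  have ff: "inner f f = 1" using nf by (simp add: power2_norm_eq_inner[symmetric])
  have cH: "connected ?H" by (rule convex_connected) (simp add: convex_Int convex_halfspace_gt)
  have cT: "connected ?T" by (simp add: convex_connected)
  have mid: "M + f /\<^sub>R 2 \<in> ?H"
    using ff nf by (simp add: dist_norm inner_add_right)
  have mT: "M + f /\<^sub>R 2 \<in> ?T" by simp
  have HS: "?H \<inter> S = {}"
  proof -
    { fix y assume "y \<in> ?H" "y \<in> S"
      then have "inner f (y - M) = 0" using off by auto
      with \<open>y \<in> ?H\<close> have False by (simp add: inner_diff_right) }
    thus ?thesis by blast
  qed
  have TS: "?T \<inter> S = {}"
  proof -
    { fix y assume y: "y \<in> ?T" "y \<in> S"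
      have "midpoint (M + f) M = M + f /\<^sub>R 2"
        by (simp add: midpoint_def scaleR_conv_of_real field_simps)
      hence "M + f /\<^sub>R 2 \<in> closed_segment (M + f) M" using midpoint_in_closed_segment by metis
      hence "?T \<subseteq> closed_segment (M + f) M" by (simp add: subset_closed_segment)
      with y A3 have "y = M" by blast
      from y(1) obtain u where u: "0 \<le> u" "u \<le> 1" "y = (1 - u) *\<^sub>R (M + f) + u *\<^sub>R (M + f /\<^sub>R 2)"
        unfolding in_segment by auto
      have "y - M = (1 - u/2) *\<^sub>R f" using u(3) by (simp add: scaleR_conv_of_real field_simps)
      with \<open>y = M\<close> have "(1 - u/2) *\<^sub>R f = 0" by simp
      with nf u have False by auto }
    thus ?thesis by blast
  qed
  have "connected (?H \<union> ?T)" using cH cT mid mT by (intro connected_Un) auto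
  moreover have "?H \<union> ?T \<subseteq> -S" using HS TS by blast
  ultimately show "connected_component (-S) (M+f) z"
    using z by (intro connected_componentI[of "?H \<union> ?T"]) auto
qed

lemma halfdisc:
  fixes c :: "real \<Rightarrow> complex" and M f :: complex
  assumes sp: "simple_path c" "pathfinish c = pathstart c"
    and nf: "norm f = 1"
    and line: "\<forall>z. dist M z < 1 \<longrightarrow> inner f (z - M) = 0 \<longrightarrow> z \<in> path_image c"
    and off: "\<forall>z\<in>path_image c. dist M z < 1 \<longrightarrow> inner f (z - M) = 0"
    and A3: "closed_segment (M + f) M \<inter> path_image c \<subseteq> {M}" "closed_segment (M - f) M \<inter> path_image c \<subseteq> {M}"
  shows "\<not> connected_component (- path_image c) (M+f) (M-f)"
proof
  let ?S = "path_image c"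
  assume cc: "connected_component (-?S) (M+f) (M-f)"
  note J0 = Jordan_inside_outside[OF sp]
  have J: "inside ?S \<inter> outside ?S = {}" "inside ?S \<union> outside ?S = - ?S"
    "frontier (inside ?S) = ?S" "frontier (outside ?S) = ?S" using J0 by simp_all
  have Hp: "\<forall>z \<in> ball M 1 \<inter> {z. inner f z > inner f M}. connected_component (-?S) (M+f) z"
    by (rule halfside[OF nf off A3(1)])
  have off': "\<forall>z\<in>?S. dist M z < 1 \<longrightarrow> inner (-f) (z - M) = 0" using off by simp
  have Hm: "\<forall>z \<in> ball M 1 \<inter> {z. inner (-f) z > inner (-f) M}. connected_component (-?S) (M+ -f) z"
    by (rule halfside) (use nf off' A3(2) in auto)
  define K where "K = connected_component_set (-?S) (M+f)"
  have inK: "z \<in> K" if "z \<in> ball M 1" "inner f (z - M) \<noteq> 0" for z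
  proof (cases "inner f (z - M) > 0")
    case True
    then show ?thesis using Hp that by (auto simp: K_def inner_diff_right)
  next
    case False
    with that have "inner (-f) z > inner (-f) M" by (auto simp: inner_diff_right)
    then have "connected_component (-?S) (M - f) z" using Hm that by auto
    then show ?thesis using cc connected_component_trans unfolding K_def by auto
  qed
  have Mf: "M + f \<in> -?S" using connected_component_in[OF cc] by auto
  have KI: "K \<subseteq> inside ?S" if "M + f \<in> inside ?S"
  proof
    fix y assume "y \<in> K"
    then have "connected_component_set (-?S) y = K" unfolding K_def by (rule connected_component_eq)
    moreover have "y \<notin> ?S" using \<open>y \<in> K\<close> connected_component_in unfolding K_def by blast
    ultimately show "y \<in> inside ?S" using that unfolding inside_def K_def by auto
  qed
  have KO: "K \<subseteq> outside ?S" if "M + f \<in> outside ?S"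
  proof
    fix y assume "y \<in> K"
    then have "connected_component_set (-?S) y = K" unfolding K_def by (rule connected_component_eq)
    moreover have "y \<notin> ?S" using \<open>y \<in> K\<close> connected_component_in unfolding K_def by blast
    ultimately show "y \<in> outside ?S" using that unfolding outside_def K_def by auto
  qed
  have MS: "M \<in> ?S" using line by simp
  have near: "\<exists>y\<in>A. dist y M < 1" if "frontier A = ?S" for A :: "complex set"
  proof -
    have "M \<in> closure A" using that MS frontier_closures by blast
    then show ?thesis using closure_approachable by (metis zero_less_one)
  qed
  have ball_K: "y \<in> K" if "y \<notin> ?S" "dist y M < 1" for y
  proof -
    have "inner f (y - M) \<noteq> 0" using line that by (auto simp: dist_commute)
    moreover have "y \<in> ball M 1" using that by (simp add: dist_commute)
    ultimately show ?thesis using inK by blast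
  qed
  from Mf J(2) have "M + f \<in> inside ?S \<or> M + f \<in> outside ?S" by (metis Un_iff)
  then show False
  proof
    assume "M + f \<in> inside ?S"
    then have KI': "K \<subseteq> inside ?S" by (rule KI)
    obtain y where y: "y \<in> outside ?S" "dist y M < 1" using near[OF J(4)] by blast
    have "y \<notin> ?S" using y(1) J(2) by (metis Compl_iff Un_iff)
    then have "y \<in> K" using ball_K y(2) by simp
    then show False using KI' y(1) J(1) by (metis disjoint_iff subsetD)
  next
    assume "M + f \<in> outside ?S"
    then have KO': "K \<subseteq> outside ?S" by (rule KO)
    obtain y where y: "y \<in> inside ?S" "dist y M < 1" using near[OF J(3)] by blast
    have "y \<notin> ?S" using y(1) J(2) by (metis Compl_iff Un_iff)
    then have "y \<in> K" using ball_K y(2) by simp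
    then show False using KO' y(1) J(1) by (metis disjoint_iff subsetD)
  qed
qed


lemma nn_adj_neq: "nn_adj a b \<Longrightarrow> a \<noteq> b"
  unfolding nn_adj_def by auto

lemma poly_inter1:
  assumes "successively nn_adj xs" "successively nn_adj ys" "xs \<noteq> []" "ys \<noteq> []"
    "set xs \<inter> set ys \<subseteq> {m}"
  shows "path_image (poly xs) \<inter> path_image (poly ys) \<subseteq> emb ` (set xs \<inter> set ys)"
proof (rule poly_inter[OF assms(1-4)])
  show "edges_of xs \<inter> edges_of ys = {}"
  proof (rule ccontr)
    assume "edges_of xs \<inter> edges_of ys \<noteq> {}"
    then obtain E where E: "E \<in> edges_of xs" "E \<in> edges_of ys" by blast
    then obtain a b where ab: "(a,b) \<in> set (zip xs (tl xs))" "E = {a,b}"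
      unfolding edges_of_def by auto
    have "a \<noteq> b" using zip_tl_adj[OF ab(1) assms(1)] nn_adj_neq by blast
    moreover have "E \<subseteq> {m}" using edges_of_sub[OF E(1)] edges_of_sub[OF E(2)] assms(5) by blast
    ultimately show False using ab(2) by auto
  qed
qed

lemma zip_tl_snoc: "xs \<noteq> [] \<Longrightarrow> set (zip (xs @ [y]) (tl (xs @ [y]))) = set (zip xs (tl xs)) \<union> {(last xs, y)}"
proof (induction xs rule: induct_list012)
  case (3 x1 x2 zs)
  then show ?case by auto
qed auto

lemma poly_snoc_image:
  assumes "xs \<noteq> []"
  shows "path_image (poly (xs @ [y])) = path_image (poly xs) \<union> closed_segment (emb (last xs)) (emb y)"
proof -
  have "path_image (poly (xs @ [y])) = emb ` set (xs @ [y]) \<union> (\<Union>(a,b)\<in>set (zip (xs@[y]) (tl (xs@[y]))). closed_segment (emb a) (emb b))"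
    by (rule poly_image) simp
  also have "\<dots> = emb ` set xs \<union> (\<Union>(a,b)\<in>set (zip xs (tl xs)). closed_segment (emb a) (emb b)) \<union> closed_segment (emb (last xs)) (emb y)"
    using zip_tl_snoc[OF assms, of y] by auto
  also have "\<dots> = path_image (poly xs) \<union> closed_segment (emb (last xs)) (emb y)"
    using poly_image[OF assms] by simp
  finally show ?thesis .
qed

lemma seg_far:
  assumes "nn_adj a b" "p \<notin> {a,b}" "z \<in> closed_segment (emb a) (emb b)"
  shows "1 \<le> dist (emb p) z"
proof -
  obtain s h where 1: "{a,b} = {s, step s h}" using nn_adj_norm[OF assms(1)] .
  have "z \<in> closed_segment (emb s) (emb (step s h))" using assms(3) seg_norm[OF 1] by simp
  from seg_hb[OF this] have H: "hb s h (Re z) (Im z)" .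
  have p: "p \<noteq> s" "p \<noteq> step s h" using assms(2) 1 by auto
  obtain s1 s2 p1 p2 where A: "s = (s1,s2)" "p = (p1,p2)" by fastforce
  have dR: "\<bar>of_int p1 - Re z\<bar> \<le> dist (emb p) z" and dI: "\<bar>of_int p2 - Im z\<bar> \<le> dist (emb p) z"
    using abs_Re_le_cmod[of "emb p - z"] abs_Im_le_cmod[of "emb p - z"] by (auto simp: dist_norm emb_def A)
  show ?thesis
  proof (cases h)
    case True
    with H have h: "Im z = of_int s2" "of_int s1 \<le> Re z" "Re z \<le> of_int s1 + 1" by (auto simp: hb_def A)
    show ?thesis
    proof (cases "p2 = s2")
      case True
      with p \<open>h\<close> have "p1 \<noteq> s1" "p1 \<noteq> s1 + 1" by (auto simp: A step_def)
      hence "p1 \<le> s1 - 1 \<or> p1 \<ge> s1 + 2" by linarith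
      hence "of_int p1 \<le> (of_int s1 - 1::real) \<or> of_int p1 \<ge> (of_int s1 + 2::real)"
        by (metis of_int_diff of_int_add of_int_le_iff of_int_1 one_add_one of_int_numeral)
      then show ?thesis using dR h by linarith
    next
      case False
      hence "p2 \<le> s2 - 1 \<or> p2 \<ge> s2 + 1" by linarith
      hence "of_int p2 \<le> (of_int s2 - 1::real) \<or> of_int p2 \<ge> (of_int s2 + 1::real)"
        by (metis of_int_diff of_int_add of_int_le_iff of_int_1)
      then show ?thesis using dI h by linarith
    qed
  next
    case False
    with H have h: "Re z = of_int s1" "of_int s2 \<le> Im z" "Im z \<le> of_int s2 + 1" by (auto simp: hb_def A)
    show ?thesis
    proof (cases "p1 = s1")
      case True
      with p \<open>\<not>h\<close> have "p2 \<noteq> s2" "p2 \<noteq> s2 + 1" by (auto simp: A step_def)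
      hence "p2 \<le> s2 - 1 \<or> p2 \<ge> s2 + 2" by linarith
      hence "of_int p2 \<le> (of_int s2 - 1::real) \<or> of_int p2 \<ge> (of_int s2 + 2::real)"
        by (metis of_int_diff of_int_add of_int_le_iff of_int_1 one_add_one of_int_numeral)
      then show ?thesis using dI h by linarith
    next
      case False
      hence "p1 \<le> s1 - 1 \<or> p1 \<ge> s1 + 1" by linarith
      hence "of_int p1 \<le> (of_int s1 - 1::real) \<or> of_int p1 \<ge> (of_int s1 + 1::real)"
        by (metis of_int_diff of_int_add of_int_le_iff of_int_1)
      then show ?thesis using dR h by linarith
    qed
  qed
qed

lemma pts_far:
  assumes "p \<noteq> m" shows "1 \<le> dist (emb m) (emb p)"
proof -
  obtain m1 m2 p1 p2 where A: "m = (m1,m2)" "p = (p1,p2)" by fastforce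
  have dR: "\<bar>of_int m1 - of_int p1\<bar> \<le> dist (emb m) (emb p)" and dI: "\<bar>of_int m2 - of_int p2\<bar> \<le> dist (emb m) (emb p)"
    using abs_Re_le_cmod[of "emb m - emb p"] abs_Im_le_cmod[of "emb m - emb p"] by (auto simp: dist_norm emb_def A)
  have "m1 \<noteq> p1 \<or> m2 \<noteq> p2" using assms A by auto
  then show ?thesis
  proof
    assume "m1 \<noteq> p1"
    hence "1 \<le> \<bar>m1 - p1\<bar>" by linarith
    hence "(1::real) \<le> \<bar>of_int m1 - of_int p1\<bar>" by (metis of_int_1 of_int_abs of_int_diff of_int_le_iff)
    thus ?thesis using dR by linarith
  next
    assume "m2 \<noteq> p2"
    hence "1 \<le> \<bar>m2 - p2\<bar>" by linarith
    hence "(1::real) \<le> \<bar>of_int m2 - of_int p2\<bar>" by (metis of_int_1 of_int_abs of_int_diff of_int_le_iff)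
    thus ?thesis using dI by linarith
  qed
qed

lemma nbr_edges:
  assumes "distinct xs" "xs = ys @ [a, m, b] @ zs" "(c,d) \<in> set (zip xs (tl xs))" "m \<in> {c,d}"
  shows "{c,d} = {a,m} \<or> {c,d} = {m,b}"
proof -
  from assms(3) obtain i where i: "i < min (length xs) (length (tl xs))" "c = xs ! i" "d = tl xs ! i"
    by (auto simp: set_zip)
  have n: "i + 1 < length xs" using i(1) by simp
  have d: "d = xs ! (i+1)" using i(3) n by (simp add: nth_tl)
  let ?k = "length ys"
  have L: "?k + 2 < length xs" using assms(2) by simp
  have xa: "xs ! ?k = a" and xm: "xs ! (?k+1) = m" and xb: "xs ! (?k+2) = b" using assms(2) by (auto simp: nth_append)
  have D: "\<And>j k. j < length xs \<Longrightarrow> k < length xs \<Longrightarrow> xs ! j = xs ! k \<longleftrightarrow> j = k"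
    using assms(1) nth_eq_iff_index_eq by blast
  have il: "i < length xs" using n by simp
  from assms(4) have "m = c \<or> m = d" by simp
  then show ?thesis
  proof
    assume mc: "m = c"
    have "xs ! i = xs ! (?k+1)" using i(2) xm mc by simp
    then have "i = ?k + 1" using D[OF il, of "?k+1"] L by simp
    then have "d = b" using d xb by simp
    then show ?thesis using mc by simp
  next
    assume md: "m = d"
    have "xs ! (i+1) = xs ! (?k+1)" using d xm md by simp
    then have "i + 1 = ?k + 1" using D[OF n, of "?k+1"] L by simp
    then have "c = a" using i(2) xa by simp
    then show ?thesis using md by simp
  qed
qed

lemma off_cond:
  assumes "distinct xs" "successively nn_adj xs" "nn_adj (last xs) (hd xs)" "xs = ys @ [a, m, b] @ zs"
    "z \<in> path_image (poly (xs @ [hd xs]))" "dist (emb m) z < 1"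
  shows "z \<in> closed_segment (emb a) (emb m) \<union> closed_segment (emb m) (emb b)"
proof -
  have ne: "xs @ [hd xs] \<noteq> []" by simp
  have sx: "successively nn_adj (xs @ [hd xs])" using assms(2,3)
    by (cases xs rule: rev_cases) (auto simp: successively_append_iff)
  have hd: "hd xs \<noteq> m" and lst: "last xs \<noteq> m"
  proof -
    have "hd xs = hd (ys @ [a,m,b] @ zs)" using assms(4) by simp
    moreover have "m \<in> set (tl (ys @ [a,m,b] @ zs))" by (cases ys) auto
    moreover have "distinct (ys @ [a,m,b] @ zs)" using assms(1,4) by simp
    ultimately show "hd xs \<noteq> m" by (cases ys) auto
    have "last xs = last (ys @ [a,m,b] @ zs)" using assms(4) by simp
    moreover have "m \<in> set (butlast (ys @ [a,m,b] @ zs))" by (cases zs rule: rev_cases) (auto simp: butlast_append)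
    moreover have "distinct (ys @ [a,m,b] @ zs)" using assms(1,4) by simp
    ultimately show "last xs \<noteq> m"
      by (metis append_butlast_last_id append_is_Nil_conv distinct_append disjoint_iff list.distinct(1) list.set_intros(1))
  qed
  show ?thesis
  proof (rule in_poly_image[OF ne assms(5)])
    fix p assume p: "p \<in> set (xs @ [hd xs])" "z = emb p"
    have "p = m" using pts_far[of p m] p(2) assms(6) by force
    then show ?thesis using p(2) by simp
  next
    fix c d assume cd: "(c,d) \<in> set (zip (xs @ [hd xs]) (tl (xs @ [hd xs])))" "z \<in> closed_segment (emb c) (emb d)"
    have adj: "nn_adj c d" using zip_tl_adj[OF cd(1) sx] by simp
    have m: "m \<in> {c,d}" using seg_far[OF adj _ cd(2), of m] assms(6) by force
    have xne: "xs \<noteq> []" using assms(4) by simp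
    have "(c,d) \<in> set (zip xs (tl xs)) \<or> (c,d) = (last xs, hd xs)" using cd(1) zip_tl_snoc[OF xne] by auto
    then have "(c,d) \<in> set (zip xs (tl xs))" using m hd lst by auto
    from nbr_edges[OF assms(1,4) this m] have "{c,d} = {a,m} \<or> {c,d} = {m,b}" .
    then show ?thesis using cd(2) by (auto simp: doubleton_eq_iff closed_segment_commute)
  qed
qed

lemma inner_seg0:
  fixes M g f :: complex
  assumes "z \<in> closed_segment M (M + g)" "inner f g = 0"
  shows "inner f (z - M) = 0"
proof -
  obtain u where u: "z = (1 - u) *\<^sub>R M + u *\<^sub>R (M + g)" using assms(1) unfolding in_segment by auto
  have "z - M = u *\<^sub>R g" using u by (simp add: algebra_simps)
  then show ?thesis using assms(2) by (simp add: inner_scaleR_right)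
qed

lemma inner_rot: "inner f (\<i> * f) = 0"
  by (simp add: inner_complex_def)

lemma line_lemma:
  fixes M f :: complex and S :: "complex set"
  assumes "norm f = 1" "closed_segment M (M + \<i>*f) \<subseteq> S" "closed_segment M (M - \<i>*f) \<subseteq> S"
  shows "\<forall>z. dist M z < 1 \<longrightarrow> inner f (z - M) = 0 \<longrightarrow> z \<in> S"
proof (intro allI impI)
  fix z assume d: "dist M z < 1" and i: "inner f (z - M) = 0"
  define w where "w = cnj f * (z - M)"
  have fc: "f * cnj f = 1" using assms(1) by (simp add: complex_norm_square[symmetric])
  have zw: "z - M = f * w" unfolding w_def using fc by (simp add: algebra_simps)
  have Rw: "Re w = 0" using i unfolding w_def by (simp add: inner_complex_def)
  have w: "w = \<i> * of_real (Im w)" using Rw by (simp add: complex_eq_iff)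
  have "norm (z - M) = norm w" using zw assms(1) by (simp add: norm_mult)
  hence nw: "norm w < 1" using d by (simp add: dist_norm norm_minus_commute)
  have aI: "\<bar>Im w\<bar> < 1" using abs_Im_le_cmod[of w] nw by linarith
  show "z \<in> S"
  proof (cases "Im w \<ge> 0")
    case True
    have "z = (1 - Im w) *\<^sub>R M + Im w *\<^sub>R (M + \<i> * f)"
      using zw w by (simp add: scaleR_conv_of_real algebra_simps)
    hence "z \<in> closed_segment M (M + \<i>*f)" unfolding in_segment using True aI by (intro exI[of _ "Im w"]) auto
    thus ?thesis using assms(2) by blast
  next
    case False
    have "z = (1 + Im w) *\<^sub>R M + (- Im w) *\<^sub>R (M - \<i> * f)"
      using zw w by (simp add: scaleR_conv_of_real algebra_simps)
    hence "z \<in> closed_segment M (M - \<i>*f)" unfolding in_segment using False aI by (intro exI[of _ "- Im w"]) auto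
    thus ?thesis using assms(3) by blast
  qed
qed


definition P2 :: "int \<times> int \<Rightarrow> int \<times> int" where "P2 p = (2 * fst p, 2 * snd p)"
definition Mid :: "int \<times> int \<Rightarrow> int \<times> int \<Rightarrow> int \<times> int" where "Mid p q = (fst p + fst q, snd p + snd q)"
definition Dd :: "int \<times> int \<Rightarrow> int \<times> int" where "Dd d = (2 * fst d + 1, 2 * snd d + 1)"
definition padd :: "int \<times> int \<Rightarrow> int \<times> int \<Rightarrow> int \<times> int" where "padd p q = (fst p + fst q, snd p + snd q)"
definition psub :: "int \<times> int \<Rightarrow> int \<times> int \<Rightarrow> int \<times> int" where "psub p q = (fst p - fst q, snd p - snd q)"
definition rot :: "int \<times> int \<Rightarrow> int \<times> int" where "rot p = (- snd p, fst p)"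

lemma P2_inj: "P2 p = P2 q \<longleftrightarrow> p = q" by (auto simp: P2_def prod_eq_iff)
lemma Dd_inj: "Dd p = Dd q \<longleftrightarrow> p = q" by (auto simp: Dd_def prod_eq_iff)
lemma P2_ne_Dd: "P2 p \<noteq> Dd d" by (auto simp: P2_def Dd_def prod_eq_iff) presburger

lemma Mid_par:
  assumes "nn_adj a b"
  shows "odd (fst (Mid a b)) \<noteq> odd (snd (Mid a b))"
  using assms unfolding nn_adj_disj by (auto simp: Mid_def)

lemma P2_ne_Mid: "nn_adj a b \<Longrightarrow> P2 p \<noteq> Mid a b"
proof
  assume "nn_adj a b" "P2 p = Mid a b"
  hence "Mid a b = (2 * fst p, 2 * snd p)" by (simp add: P2_def)
  hence "fst (Mid a b) = 2 * fst p" "snd (Mid a b) = 2 * snd p" by simp_all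
  thus False using Mid_par[OF \<open>nn_adj a b\<close>] by simp
qed
lemma Dd_ne_Mid: "nn_adj a b \<Longrightarrow> Dd p \<noteq> Mid a b"
proof
  assume "nn_adj a b" "Dd p = Mid a b"
  hence "Mid a b = (2 * fst p + 1, 2 * snd p + 1)" by (simp add: Dd_def)
  hence "fst (Mid a b) = 2 * fst p + 1" "snd (Mid a b) = 2 * snd p + 1" by simp_all
  thus False using Mid_par[OF \<open>nn_adj a b\<close>] by simp
qed

lemma Mid_inj:
  assumes "nn_adj a b" "nn_adj c d" "Mid a b = Mid c d"
  shows "{a,b} = {c,d}"
proof -
  obtain s h where 1: "{a,b} = {s, step s h}" using nn_adj_norm[OF assms(1)] .
  obtain t h' where 2: "{c,d} = {t, step t h'}" using nn_adj_norm[OF assms(2)] .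
  have m1: "Mid a b = Mid s (step s h)" and m2: "Mid c d = Mid t (step t h')"
    using 1 2 by (auto simp: doubleton_eq_iff Mid_def)
  obtain s1 s2 t1 t2 where A: "s = (s1,s2)" "t = (t1,t2)" by fastforce
  have E: "Mid s (step s h) = Mid t (step t h')" using assms(3) m1 m2 by simp
  have "h = h'"
  proof (rule ccontr)
    assume "h \<noteq> h'"
    then show False using E by (cases h; cases h') (auto simp: Mid_def step_def A; presburger)+
  qed
  then have "s = t" using E by (cases h) (auto simp: Mid_def step_def A)
  then show ?thesis using 1 2 \<open>h = h'\<close> by simp
qed

lemma adj_P2_Mid:
  assumes "nn_adj p q"
  shows "nn_adj (P2 p) (Mid p q)" "nn_adj (Mid p q) (P2 q)"
  using assms unfolding nn_adj_disj by (auto simp: P2_def Mid_def)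

fun finel :: "(int \<times> int) list \<Rightarrow> (int \<times> int) list" where
  "finel [] = []"
| "finel [p] = [P2 p]"
| "finel (p#q#r) = P2 p # Mid p q # finel (q#r)"

lemma fine_hd_last: "xs \<noteq> [] \<Longrightarrow> finel xs \<noteq> [] \<and> hd (finel xs) = P2 (hd xs) \<and> last (finel xs) = P2 (last xs)"
  by (induction xs rule: finel.induct) auto

lemma fine_set: "set (finel xs) = P2 ` set xs \<union> (\<lambda>(a,b). Mid a b) ` set (zip xs (tl xs))"
  by (induction xs rule: finel.induct) auto

lemma fine_adj: "successively nn_adj xs \<Longrightarrow> successively nn_adj (finel xs)"
proof (induction xs rule: finel.induct)
  case (3 p q r)
  have "successively nn_adj (finel (q#r))" using 3 by simp
  moreover have "hd (finel (q#r)) = P2 q" using fine_hd_last[of "q#r"] by simp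
  moreover have "finel (q#r) \<noteq> []" using fine_hd_last[of "q#r"] by simp
  ultimately show ?case using adj_P2_Mid[of p q] 3(2)
    by (cases "finel (q#r)") auto
qed auto

lemma fine_distinct: "distinct xs \<Longrightarrow> successively nn_adj xs \<Longrightarrow> distinct (finel xs)"
proof (induction xs rule: finel.induct)
  case (3 p q r)
  have pq: "nn_adj p q" using 3 by simp
  have sr: "successively nn_adj (q#r)" using 3(3) by simp
  have IH: "distinct (finel (q#r))" using 3 by simp
  have pn: "p \<notin> set (q#r)" using 3(2) by simp
  have a: "P2 p \<notin> set (finel (q#r))"
  proof
    assume "P2 p \<in> set (finel (q#r))"
    then consider "P2 p \<in> P2 ` set (q#r)" | "P2 p \<in> (\<lambda>(a,b). Mid a b) ` set (zip (q#r) (tl (q#r)))"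
      unfolding fine_set by blast
    then show False
    proof cases
      case 1 then show False using pn by (auto simp: P2_inj)
    next
      case 2
      then obtain a b where ab: "(a,b) \<in> set (zip (q#r) (tl (q#r)))" "P2 p = Mid a b" by auto
      have "nn_adj a b" using zip_tl_adj[OF ab(1) sr] by simp
      then show False using P2_ne_Mid ab(2) by blast
    qed
  qed
  have b: "Mid p q \<notin> set (finel (q#r))"
  proof
    assume "Mid p q \<in> set (finel (q#r))"
    then consider "Mid p q \<in> P2 ` set (q#r)" | "Mid p q \<in> (\<lambda>(a,b). Mid a b) ` set (zip (q#r) (tl (q#r)))"
      unfolding fine_set by blast
    then show False
    proof cases
      case 1
      then obtain z where "Mid p q = P2 z" by blast
      then show False using P2_ne_Mid[OF pq, of z] by simp
    next
      case 2
      then obtain a b where ab: "(a,b) \<in> set (zip (q#r) (tl (q#r)))" "Mid p q = Mid a b" by auto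
      have "nn_adj a b" "a \<in> set (q#r)" "b \<in> set (q#r)" using zip_tl_adj[OF ab(1) sr] by auto
      then have "{p,q} = {a,b}" using Mid_inj[OF pq] ab(2) by simp
      then have "p \<in> set (q#r)" using \<open>a \<in> set (q#r)\<close> \<open>b \<in> set (q#r)\<close> by (auto simp: doubleton_eq_iff)
      then show False using pn by simp
    qed
  qed
  have c: "P2 p \<noteq> Mid p q" using P2_ne_Mid[OF pq] .
  show ?case using a b c IH by simp
qed auto

lemma pod_geom:
  assumes "nn_adj d d'" "primal_of_dual d d' = {x, y}"
  shows "nn_adj x y \<and> Mid x y = (fst d + fst d' + 1, snd d + snd d' + 1) \<and>
    {Dd d, Dd d'} = {padd (Mid x y) (rot (psub (P2 x) (Mid x y))), psub (Mid x y) (rot (psub (P2 x) (Mid x y)))}"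
proof -
  obtain d1 d2 where A: "d = (d1,d2)" by fastforce
  from assms(1) consider "d' = (d1+1,d2)" | "d' = (d1 - 1,d2)" | "d' = (d1,d2+1)" | "d' = (d1,d2 - 1)"
    unfolding nn_adj_disj A by auto
  then show ?thesis
  proof cases
    case 1
    then have "{x,y} = {(d1+1,d2),(d1+1,d2+1)}" using assms(2) by (simp add: primal_of_dual_def A Let_def)
    then show ?thesis using 1 by (auto simp: doubleton_eq_iff A nn_adj_def Mid_def Dd_def padd_def psub_def rot_def P2_def)
  next
    case 2
    then have "{x,y} = {(d1,d2),(d1,d2+1)}" using assms(2) by (simp add: primal_of_dual_def A Let_def)
    then show ?thesis using 2 by (auto simp: doubleton_eq_iff A nn_adj_def Mid_def Dd_def padd_def psub_def rot_def P2_def)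
  next
    case 3
    then have "{x,y} = {(d1,d2+1),(d1+1,d2+1)}" using assms(2) by (simp add: primal_of_dual_def A Let_def)
    then show ?thesis using 3 by (auto simp: doubleton_eq_iff A nn_adj_def Mid_def Dd_def padd_def psub_def rot_def P2_def)
  next
    case 4
    then have "{x,y} = {(d1,d2),(d1+1,d2)}" using assms(2) by (simp add: primal_of_dual_def A Let_def)
    then show ?thesis using 4 by (auto simp: doubleton_eq_iff A nn_adj_def Mid_def Dd_def padd_def psub_def rot_def P2_def)
  qed
qed


fun dp :: "(int \<Rightarrow> int \<times> int) \<Rightarrow> (int \<Rightarrow> int \<times> int) \<Rightarrow> nat \<Rightarrow> (int \<times> int) list" where
  "dp F G 0 = []"
| "dp F G (Suc t) = F (int (Suc t)) # G (int t) # dp F G t"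

lemma dp_set: "x \<in> set (dp F G t) \<longleftrightarrow> (\<exists>i. 1 \<le> i \<and> i \<le> t \<and> x = F (int i)) \<or> (\<exists>i. i < t \<and> x = G (int i))"
proof (induction t)
  case (Suc t)
  show ?case
  proof
    assume "x \<in> set (dp F G (Suc t))"
    then show "(\<exists>i\<ge>1. i \<le> Suc t \<and> x = F (int i)) \<or> (\<exists>i<Suc t. x = G (int i))"
      using Suc by (auto intro: le_SucI less_SucI)
  next
    assume "(\<exists>i\<ge>1. i \<le> Suc t \<and> x = F (int i)) \<or> (\<exists>i<Suc t. x = G (int i))"
    then show "x \<in> set (dp F G (Suc t))"
    proof
      assume "\<exists>i\<ge>1. i \<le> Suc t \<and> x = F (int i)"
      then obtain i where "1 \<le> i" "i \<le> Suc t" "x = F (int i)" by blast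
      then show ?thesis using Suc by (cases "i = Suc t") auto
    next
      assume "\<exists>i<Suc t. x = G (int i)"
      then obtain i where i: "i < Suc t" "x = G (int i)" by blast
      show ?thesis
      proof (cases "i = t")
        case False
        then have "i < t" using i by simp
        then have "x \<in> set (dp F G t)" using Suc.IH i by blast
        then show ?thesis by simp
      qed (use i in simp)
    qed
  qed
qed simp

lemma dp_suffix: "j \<le> t \<Longrightarrow> \<exists>ys. dp F G t = ys @ dp F G j"
proof (induction t)
  case (Suc t)
  show ?case
  proof (cases "j = Suc t")
    case False
    with Suc obtain ys where "dp F G t = ys @ dp F G j" by auto
    then show ?thesis by (intro exI[of _ "F (int (Suc t)) # G (int t) # ys"]) simp
  qed (intro exI[of _ "[]"], simp)
qed simp

lemma dp_last: "1 \<le> t \<Longrightarrow> last (dp F G t) = G 0"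
proof (induction t)
  case (Suc t)
  then show ?case by (cases t) auto
qed simp

lemma dp_length: "length (dp F G t) = 2 * t"
  by (induction t) auto

lemma dp_adj:
  assumes "\<forall>i. nn_adj (F i) (G i) \<and> nn_adj (G i) (F (i+1))"
  shows "successively nn_adj (G (int t) # dp F G t)"
proof (induction t)
  case (Suc t)
  have "nn_adj (F (int (Suc t))) (G (int (Suc t)))" using assms by blast
  hence "nn_adj (G (int (Suc t))) (F (int (Suc t)))" using nn_adj_sym by blast
  moreover have "nn_adj (G (int t)) (F (int t + 1))" using assms by blast
  hence "nn_adj (F (int (Suc t))) (G (int t))" using nn_adj_sym by (simp add: add.commute)
  ultimately show ?case using Suc by simp
qed simp

lemma dp_distinct:
  assumes "inj F" "inj G" "\<forall>i j. F i \<noteq> G j"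
  shows "distinct (G (int t) # dp F G t)"
proof (induction t)
  case (Suc t)
  have FG: "\<forall>i j. G j \<noteq> F i" using assms(3) by metis
  have "G (int (Suc t)) \<notin> set (dp F G (Suc t))"
    using assms FG by (auto simp: dp_set inj_eq)
  moreover have "F (int (Suc t)) \<notin> set (G (int t) # dp F G t)"
    using assms by (auto simp: dp_set inj_eq)
  ultimately show ?case using Suc by simp
qed simp

lemma zip_mid: "(a,b) \<in> set (zip (ys @ [a,b] @ zs) (tl (ys @ [a,b] @ zs)))"
proof (induction ys)
  case Nil
  then show ?case by simp
next
  case (Cons y ys)
  then show ?case by (cases ys) auto
qed

lemma seg_in_poly:
  assumes "xs = ys @ [a,b] @ zs"
  shows "closed_segment (emb a) (emb b) \<subseteq> path_image (poly xs)"
proof -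
  have "xs \<noteq> []" using assms by simp
  have "(a,b) \<in> set (zip xs (tl xs))" using zip_mid[of a b ys zs] assms by simp
  then show ?thesis using poly_image[OF \<open>xs \<noteq> []\<close>] by fastforce
qed

lemma emb_padd: "emb (padd a b) = emb a + emb b" by (simp add: emb_def padd_def complex_eq_iff)
lemma emb_psub: "emb (psub a b) = emb a - emb b" by (simp add: emb_def psub_def complex_eq_iff)
lemma emb_rot: "emb (rot a) = \<i> * emb a" by (simp add: emb_def rot_def complex_eq_iff)

lemma unit_norm:
  assumes "nn_adj a b" shows "norm (emb (psub (P2 a) (Mid a b))) = 1"
  using assms unfolding nn_adj_disj
  by (auto simp: emb_def psub_def P2_def Mid_def complex_norm)

lemma P2_other: "P2 b = psub (Mid a b) (psub (P2 a) (Mid a b))"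
  by (simp add: P2_def Mid_def psub_def)


locale gam =
  fixes w v u :: "int \<Rightarrow> int \<times> int" and V :: "(int \<times> int) set"
  assumes winj: "inj w" and wadj: "\<forall>i. nn_adj (w i) (w (i+1))"
    and pod: "\<forall>i. primal_of_dual (w i) (w (i+1)) = {v i, u i}"
    and vV: "\<forall>i. v i \<in> V" and uV: "\<forall>i. u i \<notin> V"
begin

definition FM :: "int \<Rightarrow> int \<times> int" where "FM i = Mid (v i) (u i)"
definition FD :: "int \<Rightarrow> int \<times> int" where "FD i = Dd (w i)"

lemma geom: "nn_adj (v i) (u i) \<and> FM i = (fst (w i) + fst (w (i+1)) + 1, snd (w i) + snd (w (i+1)) + 1) \<and>
    {FD i, FD (i+1)} = {padd (FM i) (rot (psub (P2 (v i)) (FM i))), psub (FM i) (rot (psub (P2 (v i)) (FM i)))}"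
  using pod_geom[OF wadj[rule_format, of i] pod[rule_format, of i]] unfolding FM_def FD_def by simp

lemma vu_adj: "nn_adj (v i) (u i)" using geom by simp

lemma FD_FM_adj: "nn_adj (FD i) (FM i) \<and> nn_adj (FM i) (FD (i+1))"
proof -
  have F: "FM i = (fst (w i) + fst (w (i+1)) + 1, snd (w i) + snd (w (i+1)) + 1)" using geom by simp
  have A: "nn_adj (w i) (w (i+1))" using wadj by simp
  obtain a1 a2 where W: "w i = (a1,a2)" by fastforce
  from A show ?thesis unfolding nn_adj_disj W
    by (auto simp: F W FD_def Dd_def nn_adj_def)
qed

lemma FM_inj: "FM i = FM j \<Longrightarrow> i = j"
proof -
  assume e: "FM i = FM j"
  have "Mid (w i) (w (i+1)) = Mid (w j) (w (j+1))"
    using e geom[of i] geom[of j] by (simp add: Mid_def)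
  then have "{w i, w (i+1)} = {w j, w (j+1)}" using Mid_inj wadj by blast
  then have "(i = j \<and> i+1 = j+1) \<or> (i = j+1 \<and> i+1 = j)"
    using winj by (auto simp: doubleton_eq_iff inj_eq)
  then show "i = j" by auto
qed

lemma FM_not_P2: "FM i \<noteq> P2 p" using P2_ne_Mid[OF vu_adj] unfolding FM_def by metis
lemma FD_not_P2: "FD i \<noteq> P2 p" using P2_ne_Dd unfolding FD_def by metis
lemma FD_FM: "FD i \<noteq> FM j" using Dd_ne_Mid[OF vu_adj] unfolding FD_def FM_def by metis

lemma sep:
  assumes n: "1 \<le> n" "n < k" and j: "k < j"
  and eta: "distinct eta" "successively nn_adj eta" "set eta \<subseteq> V" "eta \<noteq> []" "hd eta = v 0" "last eta = v (int k)"
  and q: "successively nn_adj q" "set q \<subseteq> V" "q \<noteq> []" "hd q = v (int n)" "last q = v (int j)"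
  and r: "successively nn_adj r" "set r \<subseteq> -V" "r \<noteq> []" "hd r = u (int n)" "last r = u (int j)"
  shows "set q \<inter> set eta \<noteq> {}"
proof
  assume dis: "set q \<inter> set eta = {}"
  define R where "R = FM (int k) # dp FD FM k"
  define X where "X = finel eta @ R"
  have fe: "finel eta \<noteq> []" "hd (finel eta) = P2 (v 0)" "last (finel eta) = P2 (v (int k))"
    using fine_hd_last[OF eta(4)] eta(5,6) by auto
  have injFD: "inj FD" using winj unfolding FD_def inj_def by (simp add: Dd_inj)
  have injFM: "inj FM" using FM_inj unfolding inj_def by blast
  have dR: "distinct R" unfolding R_def by (rule dp_distinct[OF injFD injFM]) (simp add: FD_FM)
  have aR: "successively nn_adj R" unfolding R_def by (rule dp_adj) (simp add: FD_FM_adj)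
  have setR: "x \<in> set R \<Longrightarrow> (\<exists>i. x = FD i) \<or> (\<exists>i. 0 \<le> i \<and> i \<le> int k \<and> x = FM i)" for x
  proof -
    assume "x \<in> set R"
    then consider "x = FM (int k)" | "\<exists>i. 1 \<le> i \<and> i \<le> k \<and> x = FD (int i)" | "\<exists>i. i < k \<and> x = FM (int i)"
      using dp_set[of x FD FM k] unfolding R_def by auto
    then show ?thesis
    proof cases
      case 1 then show ?thesis by (intro disjI2 exI[of _ "int k"]) auto
    next
      case 2 then show ?thesis by auto
    next
      case 3
      then obtain i where "i < k" "x = FM (int i)" by blast
      then show ?thesis by (intro disjI2 exI[of _ "int i"]) auto
    qed
  qed
  have VE: "(a,b) \<in> set (zip eta (tl eta)) \<Longrightarrow> nn_adj a b \<and> a \<in> V \<and> b \<in> V \<and> a \<in> set eta \<and> b \<in> set eta" for a b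
    using zip_tl_adj[OF _ eta(2)] eta(3) by blast
  have FM_Mid: "FM i \<noteq> Mid a b" if "nn_adj a b" "a \<in> V" "b \<in> V" for i a b
  proof
    assume "FM i = Mid a b"
    then have "{v i, u i} = {a,b}" using Mid_inj[OF vu_adj that(1)] unfolding FM_def by simp
    then show False using uV that(2,3) by (auto simp: doubleton_eq_iff)
  qed
  have setE: "y \<in> set (finel eta) \<Longrightarrow> (\<exists>a\<in>set eta. y = P2 a) \<or> (\<exists>a b. (a,b) \<in> set (zip eta (tl eta)) \<and> y = Mid a b)" for y
  proof -
    assume "y \<in> set (finel eta)"
    then have "y \<in> P2 ` set eta \<or> y \<in> (\<lambda>(a,b). Mid a b) ` set (zip eta (tl eta))" by (simp add: fine_set)
    then show ?thesis by (elim disjE imageE; force)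
  qed
  have disER: "set (finel eta) \<inter> set R = {}"
  proof (rule ccontr)
    assume "set (finel eta) \<inter> set R \<noteq> {}"
    then obtain y where y: "y \<in> set (finel eta)" "y \<in> set R" by blast
    from setR[OF y(2)] setE[OF y(1)] show False
    proof (elim disjE exE conjE bexE)
      fix i a assume "y = FD i" "y = P2 a" then show False using FD_not_P2 by metis
    next
      fix i a b assume "y = FD i" "(a,b) \<in> set (zip eta (tl eta))" "y = Mid a b"
      then show False using Dd_ne_Mid VE unfolding FD_def by metis
    next
      fix i a assume "y = FM i" "y = P2 a" then show False using FM_not_P2 by metis
    next
      fix i a b assume "y = FM i" "(a,b) \<in> set (zip eta (tl eta))" "y = Mid a b"
      then show False using FM_Mid VE by metis
    qed
  qed
  have dX: "distinct X" unfolding X_def using fine_distinct[OF eta(1,2)] dR disER by simp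
  have Rne: "R \<noteq> []" "hd R = FM (int k)" unfolding R_def by simp_all
  have aX: "successively nn_adj X" unfolding X_def
    using fine_adj[OF eta(2)] aR fe Rne adj_P2_Mid(1)[OF vu_adj[of "int k"]]
    by (simp add: successively_append_iff FM_def)
  have dpne: "dp FD FM k \<noteq> []" using dp_length[of FD FM k] n by auto
  have lastX: "last X = FM 0" unfolding X_def R_def using dp_last[of k FD FM] n dpne by simp
  have hdX: "hd X = P2 (v 0)" unfolding X_def using fe by simp
  have cX: "nn_adj (last X) (hd X)" unfolding lastX hdX FM_def
    using adj_P2_Mid(1)[OF vu_adj[of 0]] nn_adj_sym by blast
  have lX: "3 \<le> length X" unfolding X_def R_def using dp_length[of FD FM k] n fe(1) by (cases "finel eta") auto
  obtain ys where ys: "dp FD FM k = ys @ dp FD FM (n+1)" using dp_suffix n by (metis Suc_eq_plus1 Suc_leI)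
  obtain n' where n': "n = Suc n'" using n by (cases n) auto
  have Xsplit: "X = (finel eta @ FM (int k) # ys) @ [FD (int n + 1), FM (int n), FD (int n)] @ (FM (int n') # dp FD FM n')"
    unfolding X_def R_def ys using n' by simp
  define Xc where "Xc = X @ [hd X]"
  define C where "C = closed_poly X"
  have Xne: "X \<noteq> []" using lX by auto
  have CP: "simple_path C" "pathfinish C = pathstart C"
    using closed_poly_props[OF dX lX aX cX] unfolding C_def by auto
  have SC: "path_image C = path_image (poly Xc)"
    using closed_poly_props(3)[OF dX lX aX cX] poly_snoc_image[OF Xne, of "hd X"] unfolding C_def Xc_def by simp
  have aXc: "successively nn_adj Xc" unfolding Xc_def using aX cX Xne
    by (simp add: successively_append_iff)
  have setXc: "set Xc = set X" unfolding Xc_def using Xne by auto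
  have safeP2: "P2 a \<notin> set X" if "a \<notin> set eta" for a
  proof
    assume "P2 a \<in> set X"
    then have "P2 a \<in> set (finel eta) \<or> P2 a \<in> set R" unfolding X_def by simp
    then show False
    proof
      assume "P2 a \<in> set (finel eta)"
      from setE[OF this] show False
      proof (elim disjE exE conjE bexE)
        fix a' assume "a' \<in> set eta" "P2 a = P2 a'" then show False using that by (simp add: P2_inj)
      next
        fix a' b' assume "(a',b') \<in> set (zip eta (tl eta))" "P2 a = Mid a' b'"
        then show False using VE P2_ne_Mid by metis
      qed
    next
      assume "P2 a \<in> set R"
      from setR[OF this] show False using FD_not_P2 FM_not_P2 by metis
    qed
  qed
  have safeMid: "Mid a b \<notin> set X" if ab: "nn_adj a b" "a \<notin> set eta" "\<forall>i. 0 \<le> i \<longrightarrow> i \<le> int k \<longrightarrow> {a,b} \<noteq> {v i, u i}" for a b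
  proof
    assume "Mid a b \<in> set X"
    then have "Mid a b \<in> set (finel eta) \<or> Mid a b \<in> set R" unfolding X_def by simp
    then show False
    proof
      assume "Mid a b \<in> set (finel eta)"
      from setE[OF this] show False
      proof (elim disjE exE conjE bexE)
        fix a' assume "a' \<in> set eta" "Mid a b = P2 a'" then show False using P2_ne_Mid[OF ab(1)] by metis
      next
        fix a' b' assume e: "(a',b') \<in> set (zip eta (tl eta))" "Mid a b = Mid a' b'"
        then have "{a,b} = {a',b'}" using VE Mid_inj ab(1) by metis
        then have "a \<in> set eta" using VE[OF e(1)] by (auto simp: doubleton_eq_iff)
        then show False using ab(2) by simp
      qed
    next
      assume "Mid a b \<in> set R"
      from setR[OF this] show False
      proof (elim disjE exE conjE)
        fix i assume "Mid a b = FD i" then show False using Dd_ne_Mid[OF ab(1)] unfolding FD_def by metis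
      next
        fix i assume i: "0 \<le> i" "i \<le> int k" "Mid a b = FM i"
        then have "{v i, u i} = {a,b}" using Mid_inj[OF vu_adj ab(1)] unfolding FM_def by simp
        then show False using ab(3) i by auto
      qed
    qed
  qed
  define S where "S = path_image C"
  have interS: "path_image (poly L) \<inter> S \<subseteq> emb ` (set L \<inter> set X)"
    if "successively nn_adj L" "L \<noteq> []" "set L \<inter> set X \<subseteq> {m}" for L m
  proof -
    have "path_image (poly L) \<inter> path_image (poly Xc) \<subseteq> emb ` (set L \<inter> set Xc)"
      by (rule poly_inter1[OF that(1) aXc that(2) _, of m]) (use that(3) setXc Xc_def in auto)
    then show ?thesis unfolding S_def SC setXc .
  qed
  have ccL: "connected_component (-S) (emb (hd L)) (emb (last L))"
    if "successively nn_adj L" "L \<noteq> []" "set L \<inter> set X = {}" for L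
  proof -
    have "path_image (poly L) \<inter> S \<subseteq> {}" using interS[OF that(1,2), of undefined] that(3) by auto
    moreover have "path (poly L)" "pathstart (poly L) = emb (hd L)" "pathfinish (poly L) = emb (last L)"
      using poly_props[OF that(2)] by auto
    ultimately show ?thesis
      by (intro connected_componentI[of "path_image (poly L)"])
         (auto simp: connected_path_image, metis pathstart_in_path_image, metis pathfinish_in_path_image)
  qed
  have vn: "v (int n) \<notin> set eta" using dis q(3,4) by (metis disjoint_iff hd_in_set)
  have vj: "v (int j) \<notin> set eta" using dis q(3,5) by (metis disjoint_iff last_in_set)
  have uV': "\<And>i. u i \<notin> set eta" using uV eta(3) by blast
  have cc1: "connected_component (-S) (emb (P2 (v (int n)))) (emb (P2 (v (int j))))"
  proof -
    have "set (finel q) \<inter> set X = {}"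
    proof (rule ccontr)
      assume "set (finel q) \<inter> set X \<noteq> {}"
      then obtain y where y: "y \<in> set (finel q)" "y \<in> set X" by blast
      then have "y \<in> P2 ` set q \<or> y \<in> (\<lambda>(a,b). Mid a b) ` set (zip q (tl q))" by (simp add: fine_set)
      then show False
      proof (elim disjE imageE)
        fix a assume "a \<in> set q" "y = P2 a"
        then show False using safeP2[of a] dis y(2) by blast
      next
        fix e assume e: "e \<in> set (zip q (tl q))" "y = (\<lambda>(a,b). Mid a b) e"
        obtain a b where ab: "e = (a,b)" by (cases e)
        have Q: "nn_adj a b" "a \<in> set q" "b \<in> set q" using zip_tl_adj[OF _ q(1)] e(1) ab by auto
        have "a \<in> V" "b \<in> V" using Q q(2) by auto
        then have "\<forall>i. 0 \<le> i \<longrightarrow> i \<le> int k \<longrightarrow> {a,b} \<noteq> {v i, u i}" using uV by (auto simp: doubleton_eq_iff)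
        then show False using safeMid[OF Q(1)] Q(2) dis y(2) e(2) ab by auto
      qed
    qed
    then show ?thesis using ccL[OF fine_adj[OF q(1)]] fine_hd_last[OF q(3)] q(4,5) by auto
  qed
  have cc2: "connected_component (-S) (emb (P2 (v (int j)))) (emb (P2 (u (int j))))"
  proof -
    let ?L = "[P2 (v (int j)), FM (int j), P2 (u (int j))]"
    have a: "successively nn_adj ?L" using adj_P2_Mid[OF vu_adj[of "int j"]] by (simp add: FM_def)
    have "\<forall>i. 0 \<le> i \<longrightarrow> i \<le> int k \<longrightarrow> {v (int j), u (int j)} \<noteq> {v i, u i}"
    proof (intro allI impI)
      fix i assume i: "0 \<le> i" "i \<le> int k"
      show "{v (int j), u (int j)} \<noteq> {v i, u i}"
      proof
        assume "{v (int j), u (int j)} = {v i, u i}"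
        then have "FM (int j) = FM i" unfolding FM_def by (auto simp: doubleton_eq_iff Mid_def add.commute)
        then have "int j = i" by (rule FM_inj)
        then show False using i j by simp
      qed
    qed
    then have "FM (int j) \<notin> set X" using safeMid[OF vu_adj vj] unfolding FM_def by simp
    then have "set ?L \<inter> set X = {}" using safeP2[OF vj] safeP2[OF uV'] by auto
    then show ?thesis using ccL[OF a] by simp
  qed
  have cc3: "connected_component (-S) (emb (P2 (u (int n)))) (emb (P2 (u (int j))))"
  proof -
    have "set (finel r) \<inter> set X = {}"
    proof (rule ccontr)
      assume "set (finel r) \<inter> set X \<noteq> {}"
      then obtain y where y: "y \<in> set (finel r)" "y \<in> set X" by blast
      then have "y \<in> P2 ` set r \<or> y \<in> (\<lambda>(a,b). Mid a b) ` set (zip r (tl r))" by (simp add: fine_set)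
      then show False
      proof (elim disjE imageE)
        fix a assume "a \<in> set r" "y = P2 a"
        then have "a \<notin> set eta" using r(2) eta(3) by auto
        then show False using safeP2[of a] y(2) \<open>y = P2 a\<close> by blast
      next
        fix e assume e: "e \<in> set (zip r (tl r))" "y = (\<lambda>(a,b). Mid a b) e"
        obtain a b where ab: "e = (a,b)" by (cases e)
        have Q: "nn_adj a b" "a \<in> set r" "b \<in> set r" using zip_tl_adj[OF _ r(1)] e(1) ab by auto
        have "a \<notin> V" "b \<notin> V" using Q r(2) by auto
        then have "\<forall>i. 0 \<le> i \<longrightarrow> i \<le> int k \<longrightarrow> {a,b} \<noteq> {v i, u i}" using vV by (auto simp: doubleton_eq_iff)
        moreover have "a \<notin> set eta" using \<open>a \<notin> V\<close> eta(3) by auto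
        ultimately show False using safeMid[OF Q(1)] y(2) e(2) ab by auto
      qed
    qed
    then show ?thesis using ccL[OF fine_adj[OF r(1)]] fine_hd_last[OF r(3)] r(4,5) by auto
  qed
  have ccvu: "connected_component (-S) (emb (P2 (v (int n)))) (emb (P2 (u (int n))))"
    using cc1 cc2 cc3 connected_component_trans connected_component_sym by metis
  define M where "M = emb (FM (int n))"
  define \<phi> where "\<phi> = psub (P2 (v (int n))) (FM (int n))"
  define f where "f = emb \<phi>"
  have nf: "norm f = 1" unfolding f_def \<phi>_def FM_def by (rule unit_norm[OF vu_adj])
  have Mf: "M + f = emb (P2 (v (int n)))" unfolding M_def f_def \<phi>_def emb_psub by simp
  have Mmf: "M - f = emb (P2 (u (int n)))"
    unfolding M_def f_def \<phi>_def P2_other[of "u (int n)" "v (int n)"] FM_def emb_psub by simp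
  have G: "{FD (int n), FD (int n + 1)} = {padd (FM (int n)) (rot \<phi>), psub (FM (int n)) (rot \<phi>)}"
    using geom[of "int n"] unfolding \<phi>_def by simp
  have G': "{emb (FD (int n)), emb (FD (int n + 1))} = {M + \<i> * f, M - \<i> * f}"
  proof -
    have "emb ` {FD (int n), FD (int n + 1)} = emb ` {padd (FM (int n)) (rot \<phi>), psub (FM (int n)) (rot \<phi>)}"
      using G by simp
    then show ?thesis by (simp add: emb_padd emb_psub emb_rot M_def f_def)
  qed
  have SX: "path_image (poly X) \<subseteq> S" unfolding S_def C_def
    using closed_poly_props(3)[OF dX lX aX cX] by auto
  have seg1: "closed_segment (emb (FD (int n + 1))) M \<subseteq> S"
    using seg_in_poly[of X "finel eta @ FM (int k) # ys" "FD (int n + 1)" "FM (int n)" "FD (int n) # FM (int n') # dp FD FM n'"] Xsplit SX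
    unfolding M_def by simp
  have seg2: "closed_segment M (emb (FD (int n))) \<subseteq> S"
    using seg_in_poly[of X "(finel eta @ FM (int k) # ys) @ [FD (int n + 1)]" "FM (int n)" "FD (int n)" "FM (int n') # dp FD FM n'"] Xsplit SX
    unfolding M_def by simp
  have segs: "closed_segment M (emb (FD (int n))) \<subseteq> S" "closed_segment M (emb (FD (int n + 1))) \<subseteq> S"
    using seg1 seg2 by (simp_all add: closed_segment_commute)
  have line: "\<forall>z. dist M z < 1 \<longrightarrow> inner f (z - M) = 0 \<longrightarrow> z \<in> S"
  proof (rule line_lemma[OF nf])
    show "closed_segment M (M + \<i> * f) \<subseteq> S" "closed_segment M (M - \<i> * f) \<subseteq> S"
      using G' segs by (auto simp: doubleton_eq_iff)
  qed
  have off: "\<forall>z\<in>S. dist M z < 1 \<longrightarrow> inner f (z - M) = 0"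
  proof (intro ballI impI)
    fix z assume z: "z \<in> S" "dist M z < 1"
    have "z \<in> path_image (poly (X @ [hd X]))" using z(1) SC unfolding S_def Xc_def by simp
    from off_cond[OF dX aX cX Xsplit this] z(2)
    have "z \<in> closed_segment M (emb (FD (int n + 1))) \<or> z \<in> closed_segment M (emb (FD (int n)))"
      unfolding M_def by (auto simp: closed_segment_commute)
    moreover have "\<And>p. p \<in> {emb (FD (int n)), emb (FD (int n + 1))} \<Longrightarrow> z \<in> closed_segment M p \<Longrightarrow> inner f (z - M) = 0"
    proof -
      fix p assume "p \<in> {emb (FD (int n)), emb (FD (int n + 1))}" "z \<in> closed_segment M p"
      then have "p = M + \<i> * f \<or> p = M + - (\<i> * f)" using G' by auto
      then show "inner f (z - M) = 0"
      proof
        assume "p = M + \<i> * f"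
        then show ?thesis using inner_seg0[of z M "\<i> * f" f] inner_rot[of f] \<open>z \<in> closed_segment M p\<close> by simp
      next
        assume "p = M + - (\<i> * f)"
        then show ?thesis using inner_seg0[of z M "- (\<i> * f)" f] inner_rot[of f] \<open>z \<in> closed_segment M p\<close>
          by (simp add: inner_minus_right)
      qed
    qed
    ultimately show "inner f (z - M) = 0" by blast
  qed
  have vX: "P2 (v (int n)) \<notin> set X" using safeP2[OF vn] .
  have uX: "P2 (u (int n)) \<notin> set X" using safeP2[OF uV'] .
  have A3a: "closed_segment (M + f) M \<inter> S \<subseteq> {M}"
  proof -
    have a: "successively nn_adj [P2 (v (int n)), FM (int n)]" using adj_P2_Mid(1)[OF vu_adj[of "int n"]] by (simp add: FM_def)
    have "path_image (poly [P2 (v (int n)), FM (int n)]) \<inter> S \<subseteq> emb ` (set [P2 (v (int n)), FM (int n)] \<inter> set X)"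
      by (rule interS[OF a, of "FM (int n)"]) (use vX in auto)
    also have "\<dots> \<subseteq> {M}" unfolding M_def using vX by auto
    finally show ?thesis using Mf unfolding M_def by simp
  qed
  have A3b: "closed_segment (M - f) M \<inter> S \<subseteq> {M}"
  proof -
    have "nn_adj (P2 (u (int n))) (FM (int n))" using adj_P2_Mid(2)[OF vu_adj[of "int n"]] nn_adj_sym by (simp add: FM_def)
    then have a: "successively nn_adj [P2 (u (int n)), FM (int n)]" by simp
    have "path_image (poly [P2 (u (int n)), FM (int n)]) \<inter> S \<subseteq> emb ` (set [P2 (u (int n)), FM (int n)] \<inter> set X)"
      by (rule interS[OF a, of "FM (int n)"]) (use uX in auto)
    also have "\<dots> \<subseteq> {M}" unfolding M_def using uX by auto
    finally show ?thesis using Mmf unfolding M_def by simp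
  qed
  have "\<not> connected_component (- path_image C) (M+f) (M-f)"
    by (rule halfdisc[OF CP nf]) (use line off A3a A3b in \<open>simp_all add: S_def\<close>)
  then show False using ccvu Mf Mmf unfolding S_def by simp
qed
end


context
  fixes V :: "(int \<times> int) set" and \<omega> :: "(int \<times> int) set \<Rightarrow> real"
  assumes nonneg: "\<forall>e \<in> edges_in V. \<omega> e \<ge> 0"
begin

lemma path_time_Cons2: "path_time \<omega> (a # b # xs) = \<omega> {a,b} + path_time \<omega> (b # xs)"
  by (simp add: path_time_def)

lemma path_time_single: "path_time \<omega> [a] = 0"
  by (simp add: path_time_def)

lemma path_time_append:
  "xs \<noteq> [] \<Longrightarrow> path_time \<omega> (xs @ tl ys) = path_time \<omega> xs + (if ys = [] then 0 else path_time \<omega> (last xs # tl ys))"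
proof (induction xs rule: induct_list012)
  case (2 x)
  then show ?case by (cases ys) (simp_all add: path_time_single)
next
  case (3 x y zs)
  then show ?case by (simp add: path_time_Cons2)
qed simp

lemma path_time_join:
  assumes "xs \<noteq> []" "ys \<noteq> []" "last xs = hd ys"
  shows "path_time \<omega> (xs @ tl ys) = path_time \<omega> xs + path_time \<omega> ys"
  using path_time_append[OF assms(1), of ys] assms(2,3) by (cases ys) auto

lemma path_time_nonneg:
  "set xs \<subseteq> V \<Longrightarrow> successively nn_adj xs \<Longrightarrow> 0 \<le> path_time \<omega> xs"
proof (induction xs rule: induct_list012)
  case (3 x y zs)
  have "nn_adj x y" using 3 by simp
  then have "{x,y} \<in> nn_edges" unfolding nn_edges_def by blast
  then have "{x,y} \<in> edges_in V" using 3 by (auto simp: edges_in_def)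
  then have "0 \<le> \<omega> {x,y}" using nonneg by blast
  moreover have "0 \<le> path_time \<omega> (y # zs)" using 3 by simp
  ultimately show ?case by (simp add: path_time_Cons2)
qed (simp_all add: path_time_def)

lemma path_time_rev: "path_time \<omega> (rev xs) = path_time \<omega> xs"
proof (induction xs rule: induct_list012)
  case (3 x y zs)
  have "rev (x # y # zs) = rev (y # zs) @ tl [y, x]" by simp
  then have "path_time \<omega> (rev (x # y # zs)) = path_time \<omega> (rev (y#zs)) + path_time \<omega> [y,x]"
    by (metis path_time_join last_rev list.distinct(1) list.sel(1) rev_is_Nil_conv last.simps)
  also have "\<dots> = path_time \<omega> (y # zs) + \<omega> {x,y}" using 3 by (simp add: path_time_Cons2 path_time_single insert_commute)
  finally show ?case by (simp add: path_time_Cons2)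
qed (simp_all add: path_time_def)

lemma is_path_join:
  "is_path nn_adj V x y xs \<Longrightarrow> is_path nn_adj V y z ys \<Longrightarrow> is_path nn_adj V x z (xs @ tl ys)"
  unfolding is_path_def
  by (cases ys) (auto simp: successively_append_iff successively_Cons)

lemma is_path_rev: "is_path nn_adj V x y xs \<Longrightarrow> is_path nn_adj V y x (rev xs)"
proof -
  assume "is_path nn_adj V x y xs"
  moreover have "successively nn_adj xs \<Longrightarrow> successively (\<lambda>a b. nn_adj b a) xs"
    using nn_adj_sym by simp
  ultimately show ?thesis unfolding is_path_def by (auto simp: hd_rev last_rev)
qed

lemma is_path_split:
  assumes "is_path nn_adj V x y xs" "c \<in> set xs"
  obtains as bs where "xs = as @ c # bs" "is_path nn_adj V x c (as @ [c])" "is_path nn_adj V c y (c # bs)"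
    "path_time \<omega> xs = path_time \<omega> (as @ [c]) + path_time \<omega> (c # bs)"
proof -
  obtain as bs where xs: "xs = as @ c # bs" using assms(2) by (meson split_list)
  have "is_path nn_adj V x c (as @ [c])" "is_path nn_adj V c y (c # bs)"
    using assms(1) unfolding is_path_def xs
    by (auto simp: successively_append_iff hd_append split: if_splits)
  moreover have "path_time \<omega> xs = path_time \<omega> (as @ [c]) + path_time \<omega> (c # bs)"
    using path_time_join[of "as @ [c]" "c # bs"] xs by simp
  ultimately show ?thesis using that xs by blast
qed

lemma pt_bdd: "bdd_below {path_time \<omega> xs | xs. is_path nn_adj V x y xs}"
  unfolding bdd_below_def using path_time_nonneg unfolding is_path_def by blast

lemma pt_le: "is_path nn_adj V x y xs \<Longrightarrow> pass_time V \<omega> x y \<le> path_time \<omega> xs"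
  unfolding pass_time_def by (rule cInf_lower[OF _ pt_bdd]) blast

lemma pt_nonneg: "is_path nn_adj V x y xs \<Longrightarrow> 0 \<le> pass_time V \<omega> x y"
  unfolding pass_time_def by (rule cInf_greatest) (auto intro: path_time_nonneg simp: is_path_def)

lemma pt_approx:
  assumes "is_path nn_adj V x y xs0" "0 < e"
  obtains xs where "is_path nn_adj V x y xs" "path_time \<omega> xs < pass_time V \<omega> x y + e"
proof -
  have ne: "{path_time \<omega> xs | xs. is_path nn_adj V x y xs} \<noteq> {}" using assms(1) by blast
  have "Inf {path_time \<omega> xs | xs. is_path nn_adj V x y xs} < pass_time V \<omega> x y + e"
    using assms(2) unfolding pass_time_def by simp
  then obtain t where "t \<in> {path_time \<omega> xs | xs. is_path nn_adj V x y xs}" "t < pass_time V \<omega> x y + e"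
    using cInf_lessD[OF ne] by blast
  then show ?thesis using that by blast
qed

lemma pt_tri:
  assumes "is_path nn_adj V x c p1" "is_path nn_adj V c y p2"
  shows "pass_time V \<omega> x y \<le> pass_time V \<omega> x c + pass_time V \<omega> c y"
proof (rule field_le_epsilon)
  fix e :: real assume e: "0 < e"
  obtain q1 where q1: "is_path nn_adj V x c q1" "path_time \<omega> q1 < pass_time V \<omega> x c + e/2"
    using pt_approx[OF assms(1)] e by (metis half_gt_zero)
  obtain q2 where q2: "is_path nn_adj V c y q2" "path_time \<omega> q2 < pass_time V \<omega> c y + e/2"
    using pt_approx[OF assms(2)] e by (metis half_gt_zero)
  have "pass_time V \<omega> x y \<le> path_time \<omega> (q1 @ tl q2)" by (rule pt_le[OF is_path_join[OF q1(1) q2(1)]])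
  also have "\<dots> = path_time \<omega> q1 + path_time \<omega> q2"
    using q1(1) q2(1) by (intro path_time_join) (auto simp: is_path_def)
  finally show "pass_time V \<omega> x y \<le> pass_time V \<omega> x c + pass_time V \<omega> c y + e" using q1(2) q2(2) by linarith
qed

lemma loop_free:
  "is_path nn_adj V x y xs \<Longrightarrow> \<exists>ys. is_path nn_adj V x y ys \<and> distinct ys \<and> set ys \<subseteq> set xs \<and> path_time \<omega> ys \<le> path_time \<omega> xs"
proof (induction "length xs" arbitrary: xs rule: less_induct)
  case less
  show ?case
  proof (cases "distinct xs")
    case True then show ?thesis using less.prems by blast
  next
    case False
    then obtain as c bs cs where xs: "xs = as @ [c] @ bs @ [c] @ cs" using not_distinct_decomp by blast
    define zs where "zs = as @ [c] @ cs"
    have P: "xs \<noteq> []" "hd xs = x" "last xs = y" "set xs \<subseteq> V" "successively nn_adj xs"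
      using less.prems unfolding is_path_def by auto
    have sa: "successively R (xs @ ys) \<Longrightarrow> successively R xs \<and> successively R ys" for R and xs ys :: "(int \<times> int) list"
      by (simp add: successively_append_iff)
    have e1: "successively nn_adj ((as @ [c]) @ (bs @ [c] @ cs))" using P(5) xs by simp
    have s1: "successively nn_adj (as @ [c])" using sa[OF e1] by simp
    have e2: "successively nn_adj (as @ (c # bs @ [c] @ cs))" using P(5) xs by simp
    have e2': "successively nn_adj (c # bs @ [c] @ cs)" using sa[OF e2] by simp
    have e3: "successively nn_adj ((c # bs @ [c]) @ cs)" using e2' by simp
    have s3: "successively nn_adj (c # bs @ [c])" using sa[OF e3] by simp
    have e4: "successively nn_adj ((c # bs) @ (c # cs))" using e2' by simp
    have s2: "successively nn_adj (c # cs)" using sa[OF e4] by simp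
    have zpath: "is_path nn_adj V x y zs"
      unfolding is_path_def zs_def using P s1 s2 unfolding xs
      by (auto simp: successively_append_iff hd_append split: if_splits)
    have t1: "path_time \<omega> xs = path_time \<omega> (as @ [c]) + path_time \<omega> (c # bs @ [c] @ cs)"
      using path_time_join[of "as @ [c]" "c # bs @ [c] @ cs"] unfolding xs by simp
    have t2: "path_time \<omega> (c # bs @ [c] @ cs) = path_time \<omega> (c # bs @ [c]) + path_time \<omega> (c # cs)"
      using path_time_join[of "c # bs @ [c]" "c # cs"] by simp
    have t3: "path_time \<omega> zs = path_time \<omega> (as @ [c]) + path_time \<omega> (c # cs)"
      using path_time_join[of "as @ [c]" "c # cs"] unfolding zs_def by simp
    have t4: "0 \<le> path_time \<omega> (c # bs @ [c])" using P(4) s3 unfolding xs by (intro path_time_nonneg) auto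
    have len: "length zs < length xs" unfolding zs_def xs by simp
    obtain ys where ys: "is_path nn_adj V x y ys" "distinct ys" "set ys \<subseteq> set zs" "path_time \<omega> ys \<le> path_time \<omega> zs"
      using less.hyps[OF len zpath] by blast
    have "set zs \<subseteq> set xs" unfolding zs_def xs by auto
    then show ?thesis using ys t1 t2 t3 t4 by (intro exI[of _ ys]) auto
  qed
qed

lemma crossing:
  assumes eta: "is_path nn_adj V b a eta" "path_time \<omega> eta \<le> pass_time V \<omega> b a + d"
    and meet: "\<forall>p. is_path nn_adj V z t p \<longrightarrow> set p \<inter> set eta \<noteq> {}"
    and ex: "is_path nn_adj V z t p0"
  shows "pass_time V \<omega> z a + pass_time V \<omega> b t \<le> pass_time V \<omega> z t + pass_time V \<omega> b a + d"
proof (rule field_le_epsilon)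
  fix e :: real assume e: "0 < e"
  obtain p where p: "is_path nn_adj V z t p" "path_time \<omega> p < pass_time V \<omega> z t + e"
    using pt_approx[OF ex e] by blast
  obtain c where c: "c \<in> set p" "c \<in> set eta" using meet p(1) by blast
  obtain p1 p2 where P: "is_path nn_adj V z c p1" "is_path nn_adj V c t p2" "path_time \<omega> p = path_time \<omega> p1 + path_time \<omega> p2"
    using is_path_split[OF p(1) c(1)] by metis
  obtain e1 e2 where E: "is_path nn_adj V b c e1" "is_path nn_adj V c a e2" "path_time \<omega> eta = path_time \<omega> e1 + path_time \<omega> e2"
    using is_path_split[OF eta(1) c(2)] by metis
  have "pass_time V \<omega> z a \<le> path_time \<omega> (p1 @ tl e2)" by (rule pt_le[OF is_path_join[OF P(1) E(2)]])
  also have "\<dots> = path_time \<omega> p1 + path_time \<omega> e2"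
    using P(1) E(2) by (intro path_time_join) (auto simp: is_path_def)
  finally have 1: "pass_time V \<omega> z a \<le> path_time \<omega> p1 + path_time \<omega> e2" .
  have "pass_time V \<omega> b t \<le> path_time \<omega> (e1 @ tl p2)" by (rule pt_le[OF is_path_join[OF E(1) P(2)]])
  also have "\<dots> = path_time \<omega> e1 + path_time \<omega> p2"
    using E(1) P(2) by (intro path_time_join) (auto simp: is_path_def)
  finally have 2: "pass_time V \<omega> b t \<le> path_time \<omega> e1 + path_time \<omega> p2" .
  show "pass_time V \<omega> z a + pass_time V \<omega> b t \<le> pass_time V \<omega> z t + pass_time V \<omega> b a + d + e"
    using 1 2 P(3) E(3) p(2) eta(2) by linarith
qed

end


lemma conv_crit:
  fixes g :: "nat \<Rightarrow> real"
  assumes bd: "\<forall>n. \<bar>g n\<bar> \<le> B"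
    and alt: "\<forall>m\<ge>2. (\<forall>j>m. g m \<le> g j + 1 / (real m + 1)) \<or> (\<forall>n. 1 \<le> n \<longrightarrow> n < m \<longrightarrow> g m \<le> g n + 1 / (real m + 1))"
  shows "\<exists>L. g \<longlonglongrightarrow> L"
proof -
  define u where "u N = Inf (g ` {N..})" for N
  have bdd: "bdd_below (g ` {N..})" for N
    using bd unfolding bdd_below_def by (metis abs_le_D2 imageE minus_le_iff)
  have ne: "g ` {N..} \<noteq> {}" for N by auto
  have u_le: "u N \<le> g n" if "N \<le> n" for N n
    unfolding u_def using that by (intro cInf_lower[OF _ bdd]) auto
  have u_ge: "c \<le> u N" if "\<And>n. N \<le> n \<Longrightarrow> c \<le> g n" for c N
    unfolding u_def using that by (intro cInf_greatest[OF ne]) auto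
  have inc: "incseq u"
    unfolding incseq_def using u_le u_ge by (meson order_trans)
  have ub: "\<forall>i. u i \<le> B" using u_le[of i i for i] bd by (meson abs_le_D1 order_trans order_refl)
  obtain L where L: "u \<longlonglongrightarrow> L" "\<forall>i. u i \<le> L" using incseq_convergent[OF inc ub] by blast
  have "g \<longlonglongrightarrow> L"
  proof (rule LIMSEQ_I)
    fix r :: real assume r: "0 < r"
    obtain N1 where N1: "\<forall>n\<ge>N1. norm (u n - L) < r" using LIMSEQ_D[OF L(1) r] by blast
    have "Inf (g ` {1..}) < u 1 + r/2" using r unfolding u_def by simp
    then obtain n0 where n0: "n0 \<ge> 1" "g n0 < u 1 + r/2" using cInf_lessD[OF ne] by auto
    obtain N2 where N2: "inverse (real (Suc N2)) < r/2" using reals_Archimedean r by (metis half_gt_zero)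
    define no where "no = max (max N1 (n0+1)) (max N2 2)"
    show "\<exists>no. \<forall>m\<ge>no. norm (g m - L) < r"
    proof (intro exI allI impI)
      fix m assume m: "no \<le> m"
      have m1: "N1 \<le> m" "n0 < m" "N2 \<le> m" "2 \<le> m" using m unfolding no_def by auto
      have lo: "L - r < g m" using N1 m1(1) u_le[of N1 m] by (auto simp: abs_less_iff)
      have "1 / (real m + 1) \<le> inverse (real (Suc N2))"
        using m1(3) by (simp add: divide_inverse le_imp_inverse_le)
      then have em: "1 / (real m + 1) < r/2" using N2 by linarith
      have "(\<forall>j>m. g m \<le> g j + 1 / (real m + 1)) \<or> (\<forall>n. 1 \<le> n \<longrightarrow> n < m \<longrightarrow> g m \<le> g n + 1 / (real m + 1))"
        using alt m1(4) by blast
      then have "g m < L + r"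
      proof
        assume A: "\<forall>j>m. g m \<le> g j + 1 / (real m + 1)"
        have "g m - 1 / (real m + 1) \<le> u (m+1)"
        proof (rule u_ge)
          fix n assume "m + 1 \<le> n"
          then have "m < n" by simp
          then show "g m - 1 / (real m + 1) \<le> g n" using A by force
        qed
        then show "g m < L + r" using L(2)[rule_format, of "m+1"] em r by linarith
      next
        assume B: "\<forall>n. 1 \<le> n \<longrightarrow> n < m \<longrightarrow> g m \<le> g n + 1 / (real m + 1)"
        have "g m \<le> g n0 + 1 / (real m + 1)" using B n0(1) m1(2) by blast
        then show "g m < L + r" using n0(2) L(2)[rule_format, of 1] em by linarith
      qed
      with lo show "norm (g m - L) < r" by (simp add: abs_less_iff)
    qed
  qed
  then show ?thesis by blast
qed


lemma pod_two: "\<exists>a b. primal_of_dual d d' = {a, b}"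
  unfolding primal_of_dual_def Let_def by auto

theorem theorem1p1:
  fixes V :: "(int \<times> int) set"
    and w :: "int \<Rightarrow> int \<times> int"
    and v :: "int \<Rightarrow> int \<times> int"
    and \<omega> :: "(int \<times> int) set \<Rightarrow> real"
    and x y :: "int \<times> int"
  assumes V_inf: "infinite V" and V_conn: "connected_in nn_adj V"
    and C_inf: "infinite (UNIV - V)" and C_conn: "connected_in nn_adj (UNIV - V)"
    and \<Gamma>: "dual_path w"
    and V_comp: "is_component (cut_adj w) V"
    and C_comp: "is_component (cut_adj w) (UNIV - V)"
    and V_edges: "\<forall>i. \<not> gamma_edge w i \<subseteq> V"
    and v_def: "\<forall>i. v i \<in> V \<and> v i \<in> gamma_edge w i"
    and \<omega>_nonneg: "\<forall>e \<in> edges_in V. \<omega> e \<ge> 0"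
    and xy: "x \<in> V" "y \<in> V"
  shows "\<exists>B::real. (\<lambda>n. pass_time V \<omega> x (v (int n)) - pass_time V \<omega> y (v (int n)))
                     \<longlonglongrightarrow> B"
proof -
  have winj: "inj w" and wadj: "\<forall>i. nn_adj (w i) (w (i+1))" using \<Gamma> unfolding dual_path_def by auto
  have "\<forall>i. \<exists>x. primal_of_dual (w i) (w (i+1)) = {v i, x} \<and> x \<notin> V"
  proof
    fix i
    obtain a b where ab: "primal_of_dual (w i) (w (i+1)) = {a, b}" using pod_two by blast
    have vi: "v i \<in> {a,b}" "v i \<in> V" using v_def ab unfolding gamma_edge_def by auto
    have nsub: "\<not> {a,b} \<subseteq> V" using V_edges ab unfolding gamma_edge_def by metis
    define x where "x = (if v i = a then b else a)"
    have "{a,b} = {v i, x}" using vi(1) unfolding x_def by auto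
    moreover have "x \<notin> V" using nsub vi unfolding x_def by auto
    ultimately have "primal_of_dual (w i) (w (i+1)) = {v i, x} \<and> x \<notin> V" using ab by simp
    then show "\<exists>x. primal_of_dual (w i) (w (i+1)) = {v i, x} \<and> x \<notin> V" by (rule exI)
  qed
  then obtain u where u: "\<forall>i. primal_of_dual (w i) (w (i+1)) = {v i, u i} \<and> u i \<notin> V" by metis
  interpret gam w v u V
    using winj wadj u v_def by unfold_locales auto
  define b where "b = v 0"
  have bV: "b \<in> V" unfolding b_def using v_def by auto
  have vV': "\<And>i. v i \<in> V" using v_def by auto
  have pathex: "\<And>p q. p \<in> V \<Longrightarrow> q \<in> V \<Longrightarrow> \<exists>xs. is_path nn_adj V p q xs"
    using V_conn unfolding connected_in_def by blast
  let ?T = "pass_time V \<omega>"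
  have etaex: "\<exists>e. is_path nn_adj V b (v (int k)) e \<and> distinct e \<and> path_time \<omega> e \<le> ?T b (v (int k)) + 1 / (real k + 1)" for k
  proof -
    obtain p0 where p0: "is_path nn_adj V b (v (int k)) p0" using pathex[OF bV vV'] by blast
    have "0 < 1 / (real k + 1)" by simp
    then obtain p where p: "is_path nn_adj V b (v (int k)) p" "path_time \<omega> p < ?T b (v (int k)) + 1 / (real k + 1)"
      using pt_approx[OF \<omega>_nonneg p0] by blast
    obtain e where "is_path nn_adj V b (v (int k)) e" "distinct e" "path_time \<omega> e \<le> path_time \<omega> p"
      using loop_free[OF \<omega>_nonneg p(1)] by blast
    then show ?thesis using p(2) by (intro exI[of _ e]) auto
  qed
  define eta where "eta k = (SOME e. is_path nn_adj V b (v (int k)) e \<and> distinct e \<and> path_time \<omega> e \<le> ?T b (v (int k)) + 1 / (real k + 1))" for k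
  have eta: "is_path nn_adj V b (v (int k)) (eta k)" "distinct (eta k)" "path_time \<omega> (eta k) \<le> ?T b (v (int k)) + 1 / (real k + 1)" for k
    using someI_ex[OF etaex[of k]] unfolding eta_def by auto
  have conv: "\<exists>L. (\<lambda>n. ?T z (v (int n)) - ?T b (v (int n))) \<longlonglongrightarrow> L" if zV: "z \<in> V" for z
  proof (rule conv_crit)
    define g where "g n = ?T z (v (int n)) - ?T b (v (int n))" for n
    obtain pzb where pzb: "is_path nn_adj V z b pzb" using pathex[OF zV bV] by blast
    obtain pbz where pbz: "is_path nn_adj V b z pbz" using pathex[OF bV zV] by blast
    show "\<forall>n. \<bar>?T z (v (int n)) - ?T b (v (int n))\<bar> \<le> ?T z b + ?T b z"
    proof
      fix n
      obtain p1 where p1: "is_path nn_adj V b (v (int n)) p1" using pathex[OF bV vV'] by blast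
      obtain p2 where p2: "is_path nn_adj V z (v (int n)) p2" using pathex[OF zV vV'] by blast
      have "?T z (v (int n)) \<le> ?T z b + ?T b (v (int n))" by (rule pt_tri[OF \<omega>_nonneg pzb p1])
      moreover have "?T b (v (int n)) \<le> ?T b z + ?T z (v (int n))" by (rule pt_tri[OF \<omega>_nonneg pbz p2])
      moreover have "0 \<le> ?T z b" "0 \<le> ?T b z" using pt_nonneg[OF \<omega>_nonneg pzb] pt_nonneg[OF \<omega>_nonneg pbz] by auto
      ultimately show "\<bar>?T z (v (int n)) - ?T b (v (int n))\<bar> \<le> ?T z b + ?T b z" by linarith
    qed
    show "\<forall>m\<ge>2. (\<forall>j>m. g m \<le> g j + 1 / (real m + 1)) \<or> (\<forall>n. 1 \<le> n \<longrightarrow> n < m \<longrightarrow> g m \<le> g n + 1 / (real m + 1))"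
      unfolding g_def[abs_def]
    proof (intro allI impI)
      fix m :: nat assume m2: "2 \<le> m"
      show "(\<forall>j>m. ?T z (v (int m)) - ?T b (v (int m)) \<le> ?T z (v (int j)) - ?T b (v (int j)) + 1 / (real m + 1)) \<or>
            (\<forall>n. 1 \<le> n \<longrightarrow> n < m \<longrightarrow> ?T z (v (int m)) - ?T b (v (int m)) \<le> ?T z (v (int n)) - ?T b (v (int n)) + 1 / (real m + 1))"
      proof (cases "\<forall>j>m. \<forall>p. is_path nn_adj V z (v (int j)) p \<longrightarrow> set p \<inter> set (eta m) \<noteq> {}")
        case True
        show ?thesis
        proof (rule disjI1, intro allI impI)
          fix j :: nat assume "m < j"
          obtain p0 where p0: "is_path nn_adj V z (v (int j)) p0" using pathex[OF zV vV'] by blast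
          have "?T z (v (int m)) + ?T b (v (int j)) \<le> ?T z (v (int j)) + ?T b (v (int m)) + 1 / (real m + 1)"
            by (rule crossing[OF \<omega>_nonneg eta(1,3) _ p0]) (use True \<open>m < j\<close> in blast)
          then show "?T z (v (int m)) - ?T b (v (int m)) \<le> ?T z (v (int j)) - ?T b (v (int j)) + 1 / (real m + 1)"
            by linarith
        qed
      next
        case False
        then obtain j p1 where j: "m < j" and p1: "is_path nn_adj V z (v (int j)) p1" and dis1: "set p1 \<inter> set (eta m) = {}"
          by blast
        show ?thesis
        proof (rule disjI2, intro allI impI)
          fix n :: nat assume n: "1 \<le> n" "n < m"
          have meet: "\<forall>p. is_path nn_adj V z (v (int n)) p \<longrightarrow> set p \<inter> set (eta m) \<noteq> {}"
          proof (intro allI impI notI)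
            fix p assume p: "is_path nn_adj V z (v (int n)) p" and dis2: "set p \<inter> set (eta m) = {}"
            define q where "q = rev p @ tl p1"
            have qp: "is_path nn_adj V (v (int n)) (v (int j)) q" unfolding q_def
              by (rule is_path_join[OF \<omega>_nonneg is_path_rev[OF \<omega>_nonneg p] p1])
            have "set (tl p1) \<subseteq> set p1" by (cases p1) auto
            then have qs: "set q \<subseteq> set p \<union> set p1" unfolding q_def by auto
            have "set q \<inter> set (eta m) = {}" using qs dis1 dis2 by blast
            moreover obtain r where r: "is_path nn_adj (UNIV - V) (u (int n)) (u (int j)) r"
              using C_conn u unfolding connected_in_def by blast
            have "set q \<inter> set (eta m) \<noteq> {}"
            proof (rule sep[OF n j])
              show "distinct (eta m)" by (rule eta(2))
              show "successively nn_adj (eta m)" "set (eta m) \<subseteq> V" "eta m \<noteq> []" "hd (eta m) = v 0" "last (eta m) = v (int m)"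
                using eta(1)[of m] unfolding is_path_def b_def by auto
              show "successively nn_adj q" "set q \<subseteq> V" "q \<noteq> []" "hd q = v (int n)" "last q = v (int j)"
                using qp unfolding is_path_def by auto
              show "successively nn_adj r" "set r \<subseteq> -V" "r \<noteq> []" "hd r = u (int n)" "last r = u (int j)"
                using r unfolding is_path_def by auto
            qed
            ultimately show False by blast
          qed
          obtain p0 where p0: "is_path nn_adj V z (v (int n)) p0" using pathex[OF zV vV'] by blast
          have "?T z (v (int m)) + ?T b (v (int n)) \<le> ?T z (v (int n)) + ?T b (v (int m)) + 1 / (real m + 1)"
            by (rule crossing[OF \<omega>_nonneg eta(1,3) meet p0])
          then show "?T z (v (int m)) - ?T b (v (int m)) \<le> ?T z (v (int n)) - ?T b (v (int n)) + 1 / (real m + 1)"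
            by linarith
        qed
      qed
    qed
  qed
  obtain Lx where Lx: "(\<lambda>n. ?T x (v (int n)) - ?T b (v (int n))) \<longlonglongrightarrow> Lx" using conv[OF xy(1)] by blast
  obtain Ly where Ly: "(\<lambda>n. ?T y (v (int n)) - ?T b (v (int n))) \<longlonglongrightarrow> Ly" using conv[OF xy(2)] by blast
  have "(\<lambda>n. (?T x (v (int n)) - ?T b (v (int n))) - (?T y (v (int n)) - ?T b (v (int n)))) \<longlonglongrightarrow> Lx - Ly"
    by (rule tendsto_diff[OF Lx Ly])
  then show ?thesis by (intro exI[of _ "Lx - Ly"]) simp
qed


end
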